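(* Under the setting below, $G_{15}$ is plane (no two of its edges properly cross).
   Context: Setting: $V$ is a finite set of points (vertices) in the plane and $S$ a finite set of simple polygonal obstacles, pairwise non-intersecting, all of whose corners lie in $V$; each vertex is a corner of at most one obstacle and occurs at most once on its boundary. General position: no three vertices collinear and no two vertices on a line parallel to a cone boundary ray. Points $p,q$ are visible if segment $pq$ does not properly intersect any obstacle (touching at vertices or running along boundaries is allowed, meeting an obstacle interior is not). Cones: around each vertex $u$ the plane is partitioned into six cones of angle $\pi/3$ with apex $u$; $C_0^u$ has the upward vertical bisector, and counterclockwise the cones are $C_0^u,\overline{C_2^u},C_1^u,\overline{C_0^u},C_2^u,\overline{C_1^u}$ (positive cones $C_i$, negative cones $\overline{C_i}$). If the obstacle having $u$ as a corner splits a cone so that there are vertices visible from $u$ on both sides of the obstacle within it, the cone is regarded as two subcones; otherwise a single subcone. $G_\infty$: for every vertex $u$ and every positive subcone of $u$, add an edge from $u$ to the vertex visible from $u$ in that subcone whose orthogonal projection onto the cone's bisector is closest to $u$. $G_{15}$ is obtained from $G_\infty$ by, for every vertex $u$ and every negative subcone of $u$, deleting all edges of $G_\infty$ incident to $u$ in that subcone except the leftmost (clockwise extreme as seen from $u$), the rightmost (counterclockwise extreme), and the one to the closest vertex (smallest projection onto the cone's bisector). *)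

theory Defs
  imports "HOL-Analysis.Analysis"
begin

type_synonym pt = "real \<times> real"

definition cross :: "pt \<Rightarrow> pt \<Rightarrow> real" where
  "cross a b = fst a * snd b - snd a * fst b"

definition dot :: "pt \<Rightarrow> pt \<Rightarrow> real" where
  "dot a b = fst a * fst b + snd a * snd b"

definition poly_edge :: "pt list \<Rightarrow> nat \<Rightarrow> pt set" where
  "poly_edge P i = closed_segment (P ! i) (P ! (Suc i mod length P))"

definition poly_boundary :: "pt list \<Rightarrow> pt set" where
  "poly_boundary P = (\<Union>i<length P. poly_edge P i)"

definition poly_interior :: "pt list \<Rightarrow> pt set" where
  "poly_interior P = inside (poly_boundary P)"

definition simple_polygon :: "pt list \<Rightarrow> bool" where
  "simple_polygon P \<longleftrightarrow> length P \<ge> 3 \<and> distinct P \<and>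
     (\<forall>i<length P. \<forall>j<length P. i \<noteq> j \<longrightarrow>
        (if Suc i mod length P = j then poly_edge P i \<inter> poly_edge P j = {P ! j}
         else if Suc j mod length P = i then poly_edge P i \<inter> poly_edge P j = {P ! i}
         else poly_edge P i \<inter> poly_edge P j = {}))"

text \<open>V finite vertex set, S finite set of pairwise non-intersecting simple polygons
  with corners in V; each vertex occurs at most once on a boundary (distinct) and is a
  corner of at most one obstacle (implied by disjointness).\<close>
definition obstacle_setting :: "pt set \<Rightarrow> pt list set \<Rightarrow> bool" where
  "obstacle_setting V S \<longleftrightarrow> finite V \<and> finite S \<and>
     (\<forall>Ob\<in>S. simple_polygon Ob \<and> set Ob \<subseteq> V) \<and>
     (\<forall>O1\<in>S. \<forall>O2\<in>S. O1 \<noteq> O2 \<longrightarrow>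
        (poly_boundary O1 \<union> poly_interior O1) \<inter> (poly_boundary O2 \<union> poly_interior O2) = {})"

text \<open>Cone boundary rays have directions at angles j*pi/3; lines parallel to them have
  directions at angles 0, pi/3, 2pi/3.\<close>
definition general_position :: "pt set \<Rightarrow> bool" where
  "general_position V \<longleftrightarrow>
     (\<forall>p\<in>V. \<forall>q\<in>V. \<forall>r\<in>V. p \<noteq> q \<and> q \<noteq> r \<and> p \<noteq> r \<longrightarrow> cross (q - p) (r - p) \<noteq> 0) \<and>
     (\<forall>p\<in>V. \<forall>q\<in>V. p \<noteq> q \<longrightarrow>
        (\<forall>j\<in>{0,1,2::nat}. cross (q - p) (cos (real j * pi / 3), sin (real j * pi / 3)) \<noteq> 0))"

definition visible :: "pt list set \<Rightarrow> pt \<Rightarrow> pt \<Rightarrow> bool" where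
  "visible S p q \<longleftrightarrow> (\<forall>Ob\<in>S. closed_segment p q \<inter> poly_interior Ob = {})"

text \<open>Cone k (k < 6) has bisector at angle pi/2 + k*pi/3. In counterclockwise order:
  k=0: C_0, k=1: neg C_2, k=2: C_1, k=3: neg C_0, k=4: C_2, k=5: neg C_1.
  Positive cones: even k; negative cones: odd k.\<close>
definition cone_dir :: "nat \<Rightarrow> pt" where
  "cone_dir k = (cos (pi / 2 + real k * pi / 3), sin (pi / 2 + real k * pi / 3))"

definition in_cone :: "nat \<Rightarrow> pt \<Rightarrow> pt \<Rightarrow> bool" where
  "in_cone k u v \<longleftrightarrow> v \<noteq> u \<and> dot (v - u) (cone_dir k) \<ge> norm (v - u) * cos (pi / 6)"

definition proj :: "nat \<Rightarrow> pt \<Rightarrow> pt \<Rightarrow> real" where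
  "proj k u v = dot (v - u) (cone_dir k)"

definition enters_obstacle :: "pt list \<Rightarrow> pt \<Rightarrow> pt \<Rightarrow> bool" where
  "enters_obstacle Ob u d \<longleftrightarrow> (\<exists>\<epsilon>>0. \<forall>t. 0 < t \<and> t < \<epsilon> \<longrightarrow> u + t *\<^sub>R d \<in> poly_interior Ob)"

text \<open>Two points v, w of the same cone of u lie in the same subcone iff the obstacle
  having u as a corner does not separate them, i.e. no direction strictly between
  v - u and w - u enters that obstacle.\<close>
definition same_subcone :: "pt list set \<Rightarrow> pt \<Rightarrow> pt \<Rightarrow> pt \<Rightarrow> bool" where
  "same_subcone S u v w \<longleftrightarrow>
     (\<forall>Ob\<in>S. u \<in> set Ob \<longrightarrow> (\<forall>d\<in>open_segment (v - u) (w - u). \<not> enters_obstacle Ob u d))"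

definition Ginf_edge :: "pt set \<Rightarrow> pt list set \<Rightarrow> pt \<Rightarrow> pt \<Rightarrow> bool" where
  "Ginf_edge V S u v \<longleftrightarrow> u \<in> V \<and> v \<in> V \<and>
     (\<exists>k<6. even k \<and> in_cone k u v \<and> visible S u v \<and>
        (\<forall>w\<in>V. in_cone k u w \<and> visible S u w \<and> same_subcone S u v w \<longrightarrow> proj k u v \<le> proj k u w))"

definition Ginf :: "pt set \<Rightarrow> pt list set \<Rightarrow> pt set set" where
  "Ginf V S = {{u, v} | u v. Ginf_edge V S u v}"

text \<open>Edge {x,y} of G_inf survives the pruning at x: if y lies in a negative cone of x,
  then among the G_inf-neighbours of x in the same subcone, y is the clockwise extreme,
  the counterclockwise extreme, or the closest one.\<close>
definition kept_at :: "pt set \<Rightarrow> pt list set \<Rightarrow> pt \<Rightarrow> pt \<Rightarrow> bool" where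
  "kept_at V S x y \<longleftrightarrow> (\<forall>k<6. odd k \<and> in_cone k x y \<longrightarrow>
     (let N = {z\<in>V. {x, z} \<in> Ginf V S \<and> in_cone k x z \<and> same_subcone S x y z} in
        (\<forall>z\<in>N. z \<noteq> y \<longrightarrow> cross (y - x) (z - x) > 0) \<or>
        (\<forall>z\<in>N. z \<noteq> y \<longrightarrow> cross (z - x) (y - x) > 0) \<or>
        (\<forall>z\<in>N. proj k x y \<le> proj k x z)))"

definition G15 :: "pt set \<Rightarrow> pt list set \<Rightarrow> pt set set" where
  "G15 V S = {e \<in> Ginf V S. \<forall>x y. e = {x, y} \<longrightarrow> kept_at V S x y}"

definition plane :: "pt set set \<Rightarrow> bool" where
  "plane E \<longleftrightarrow> (\<forall>a b c d. {a, b} \<in> E \<and> {c, d} \<in> E \<and> {a, b} \<noteq> {c, d} \<longrightarrow>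
      open_segment a b \<inter> open_segment c d = {})"

end

theory Submission
  imports Defs
begin

fun chainp :: "pt list \<Rightarrow> real \<Rightarrow> pt" where
  "chainp (a # b # c # rest) = linepath a b +++ chainp (b # c # rest)"
| "chainp [a, b] = linepath a b"
| "chainp _ = linepath 0 0"

lemma chainp_start: "pathstart (chainp (a # b # rest)) = a"
  by (cases rest) auto

lemma chainp_finish: "length L \<ge> 2 \<Longrightarrow> pathfinish (chainp L) = last L"
proof (induction L rule: chainp.induct)
  case (1 a b c rest)
  then show ?case by simp
qed auto

lemma chainp_image:
  "length L \<ge> 2 \<Longrightarrow> path_image (chainp L) = (\<Union>i<length L - 1. closed_segment (L!i) (L!Suc i))"
proof (induction L rule: chainp.induct)
  case (1 a b c rest)
  have "path_image (chainp (a # b # c # rest)) = closed_segment a b \<union> path_image (chainp (b # c # rest))"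
    by (simp add: path_image_join chainp_start)
  also have "\<dots> = closed_segment a b \<union> (\<Union>i<length (b#c#rest) - 1. closed_segment ((b#c#rest)!i) ((b#c#rest)!Suc i))"
    using 1 by simp
  also have "\<dots> = (\<Union>i<length (a#b#c#rest) - 1. closed_segment ((a#b#c#rest)!i) ((a#b#c#rest)!Suc i))"
  proof -
    have e: "{..<length (a#b#c#rest) - 1} = insert 0 (Suc ` {..<length (b#c#rest) - 1})"
      by (simp add: lessThan_Suc_eq_insert_0)
    show ?thesis unfolding e by simp
  qed
  finally show ?case .
qed auto

definition good_chain :: "pt list \<Rightarrow> bool" where
  "good_chain L \<longleftrightarrow> length L \<ge> 2 \<and> distinct L \<and>
     (\<forall>i j. i < j \<and> Suc j < length L \<longrightarrow>
        closed_segment (L!i) (L!Suc i) \<inter> closed_segment (L!j) (L!Suc j) \<subseteq> (if j = Suc i then {L!j} else {}))"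

lemma good_chain_tl:
  assumes "good_chain (a # b # c # rest)"
  shows "good_chain (b # c # rest)"
proof -
  have "\<forall>i j. i < j \<and> Suc j < length (b#c#rest) \<longrightarrow>
        closed_segment ((b#c#rest)!i) ((b#c#rest)!Suc i) \<inter> closed_segment ((b#c#rest)!j) ((b#c#rest)!Suc j)
         \<subseteq> (if j = Suc i then {(b#c#rest)!j} else {})"
  proof (intro allI impI)
    fix i j assume h: "i < j \<and> Suc j < length (b#c#rest)"
    then have "Suc i < Suc j \<and> Suc (Suc j) < length (a#b#c#rest)" by simp
    then have "closed_segment ((a#b#c#rest)!Suc i) ((a#b#c#rest)!Suc (Suc i)) \<inter> closed_segment ((a#b#c#rest)!Suc j) ((a#b#c#rest)!Suc (Suc j))
         \<subseteq> (if Suc j = Suc (Suc i) then {(a#b#c#rest)!Suc j} else {})"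
      using assms unfolding good_chain_def by blast
    then show "closed_segment ((b#c#rest)!i) ((b#c#rest)!Suc i) \<inter> closed_segment ((b#c#rest)!j) ((b#c#rest)!Suc j)
         \<subseteq> (if j = Suc i then {(b#c#rest)!j} else {})" unfolding nth_Cons_Suc nat.inject .
  qed
  then show ?thesis using assms unfolding good_chain_def by simp
qed

lemma good_chain_arc: "good_chain L \<Longrightarrow> arc (chainp L)"
proof (induction L rule: chainp.induct)
  case (1 a b c rest)
  let ?L = "a # b # c # rest"
  have ab: "a \<noteq> b" using 1(2) unfolding good_chain_def by auto
  have IH: "arc (chainp (b # c # rest))" using 1 good_chain_tl by blast
  have "path_image (linepath a b) \<inter> path_image (chainp (b # c # rest)) \<subseteq> {b}"
  proof
    fix x assume x: "x \<in> path_image (linepath a b) \<inter> path_image (chainp (b # c # rest))"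
    then obtain i where i: "i < length (b#c#rest) - 1" "x \<in> closed_segment ((b#c#rest)!i) ((b#c#rest)!Suc i)"
      using chainp_image[of "b#c#rest"] by auto
    have "0 < Suc i \<and> Suc (Suc i) < length ?L" using i by simp
    then have "closed_segment (?L!0) (?L!Suc 0) \<inter> closed_segment (?L!Suc i) (?L!Suc (Suc i)) \<subseteq> (if Suc i = Suc 0 then {?L!Suc i} else {})"
      using 1(2) unfolding good_chain_def by blast
    then show "x \<in> {b}" using x i by (auto split: if_splits)
  qed
  then show ?case using ab IH unfolding chainp.simps by (intro arc_join) (auto simp: chainp_start)
next
  case (2 a b)
  then show ?case unfolding good_chain_def by auto
qed (auto simp: good_chain_def)

lemma chainp_start': "length L \<ge> 2 \<Longrightarrow> pathstart (chainp L) = L!0"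
  by (cases L rule: chainp.cases) auto

lemma simple_polygon_edges:
  assumes "simple_polygon P" "i < length P" "j < length P" "i \<noteq> j"
  shows "poly_edge P i \<inter> poly_edge P j \<subseteq> {P!i, P!j}"
  using assms unfolding simple_polygon_def by (auto split: if_splits)

lemma simple_polygon_H:
  assumes "simple_polygon P" "a < length P" "b < length P" "a \<noteq> b"
  shows "(if Suc a mod length P = b then poly_edge P a \<inter> poly_edge P b = {P ! b}
         else if Suc b mod length P = a then poly_edge P a \<inter> poly_edge P b = {P ! a}
         else poly_edge P a \<inter> poly_edge P b = {})"
  using assms unfolding simple_polygon_def by blast

lemma sucmod: "i < n \<Longrightarrow> Suc i mod n = (if Suc i = n then 0 else Suc i)"
  by (cases "Suc i = n") auto

lemma polygon_path:
  assumes sp: "simple_polygon P"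
  obtains g where "simple_path g" "pathfinish g = pathstart g" "path_image g = poly_boundary P"
proof -
  define n where "n = length P"
  have n3: "n \<ge> 3" and dP: "distinct P" using sp unfolding simple_polygon_def n_def by auto
  define L where "L = map (\<lambda>i. P!(Suc i mod n)) [0..<n]"
  have lenL: "length L = n" unfolding L_def by simp
  have Li: "i < n \<Longrightarrow> L!i = P!(Suc i mod n)" for i unfolding L_def by simp
  have distL: "distinct L"
    unfolding L_def distinct_map
  proof
    show "distinct [0..<n]" by simp
    show "inj_on (\<lambda>i. P ! (Suc i mod n)) (set [0..<n])"
    proof (rule inj_onI)
      fix i j assume i: "i \<in> set [0..<n]" and j: "j \<in> set [0..<n]" and e: "P ! (Suc i mod n) = P ! (Suc j mod n)"
      have n0: "0 < n" using n3 by simp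
      have "Suc i mod n = Suc j mod n" using nth_eq_iff_index_eq[OF dP, of "Suc i mod n" "Suc j mod n"] e n0 n_def by simp
      then show "i = j" using i j sucmod[of i n] sucmod[of j n] by (auto split: if_splits)
    qed
  qed
  have segL: "i < n - 1 \<Longrightarrow> closed_segment (L!i) (L!Suc i) = poly_edge P (Suc i)" for i
    using Li[of i] Li[of "Suc i"] unfolding poly_edge_def n_def by simp
  have gc: "good_chain L"
    unfolding good_chain_def
  proof (intro conjI allI impI)
    show "2 \<le> length L" using lenL n3 by simp
    show "distinct L" by (rule distL)
    fix i j assume h: "i < j \<and> Suc j < length L"
    have A: "closed_segment (L!i) (L!Suc i) = poly_edge P (Suc i)" proof - have "i < n - 1" using h lenL by linarith then show ?thesis using segL[of i] by simp qed
    have B: "closed_segment (L!j) (L!Suc j) = poly_edge P (Suc j)" proof - have "j < n - 1" using h lenL by linarith then show ?thesis using segL[of j] by simp qed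
    have Lj: "L!j = P!Suc j" using Li[of j] h lenL by simp
    have "Suc i < n" "Suc j < n" "Suc i \<noteq> Suc j" using h lenL by auto
    then have *: "(if Suc (Suc i) mod n = Suc j then poly_edge P (Suc i) \<inter> poly_edge P (Suc j) = {P ! Suc j}
         else if Suc (Suc j) mod n = Suc i then poly_edge P (Suc i) \<inter> poly_edge P (Suc j) = {P ! Suc i}
         else poly_edge P (Suc i) \<inter> poly_edge P (Suc j) = {})"
      using sp unfolding simple_polygon_def n_def by blast
    have c1: "(Suc (Suc i) mod n = Suc j) = (j = Suc i)" using h lenL sucmod[of "Suc i" n] by auto
    have c2: "Suc (Suc j) mod n \<noteq> Suc i" using h lenL sucmod[of "Suc j" n] by auto
    show "closed_segment (L!i) (L!Suc i) \<inter> closed_segment (L!j) (L!Suc j) \<subseteq> (if j = Suc i then {L!j} else {})"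
    proof -
      have "poly_edge P (Suc i) \<inter> poly_edge P (Suc j) \<subseteq> (if j = Suc i then {P!Suc j} else {})"
      proof (cases "j = Suc i")
        case True
        then have "Suc (Suc i) mod n = Suc j" using c1 by simp
        then show ?thesis using * True by simp
      next
        case False
        then have "Suc (Suc i) mod n \<noteq> Suc j" using c1 by simp
        then show ?thesis using * False c2 by simp
      qed
      then show ?thesis unfolding A B by (simp only: Lj)
    qed
  qed
  define g where "g = linepath (P!0) (P!1) +++ chainp L"
  have P01: "P!0 \<noteq> P!1" proof assume "P!0 = P!1" then have "(0::nat) = 1" using nth_eq_iff_index_eq[OF dP, of 0 1] n3 n_def proof - have "P \<noteq> []" using n3 n_def by auto then show ?thesis using \<open>P!0 = P!1\<close> nth_eq_iff_index_eq[OF dP, of 0 1] n3 n_def by simp qed then show False by simp qed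
  have st: "pathstart (chainp L) = P!1" using chainp_start'[of L] lenL n3 Li[of 0] by simp
  have fi: "pathfinish (chainp L) = P!0"
  proof -
    have "last L = L!(n-1)" using lenL n3 by (subst last_conv_nth) auto
    also have "\<dots> = P!0" using Li[of "n-1"] n3 by simp
    finally show ?thesis using chainp_finish[of L] lenL n3 by simp
  qed
  have imL: "path_image (chainp L) = (\<Union>i<n-1. poly_edge P (Suc i))"
  proof -
    have "path_image (chainp L) = (\<Union>i<n-1. closed_segment (L!i) (L!Suc i))"
      using chainp_image[of L] lenL n3 by simp
    also have "\<dots> = (\<Union>i<n-1. poly_edge P (Suc i))"
      using segL by (intro SUP_cong) auto
    finally show ?thesis .
  qed
  have e0: "poly_edge P 0 = closed_segment (P!0) (P!1)" unfolding poly_edge_def using n3 n_def by simp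
  have img: "path_image g = poly_boundary P"
  proof -
    have "path_image g = poly_edge P 0 \<union> (\<Union>i<n-1. poly_edge P (Suc i))"
    proof -
      have "path_image g = path_image (linepath (P!0) (P!1)) \<union> path_image (chainp L)"
        unfolding g_def by (rule path_image_join) (simp add: st)
      then show ?thesis using imL e0 by simp
    qed
    also have "\<dots> = (\<Union>i<n. poly_edge P i)"
    proof -
      have "n = Suc (n-1)" using n3 by simp
      then have "{..<n} = insert 0 (Suc ` {..<n-1})" by (metis lessThan_Suc_eq_insert_0)
      then show ?thesis by simp
    qed
    finally show ?thesis unfolding poly_boundary_def n_def .
  qed
  have "simple_path g"
    unfolding g_def
  proof (rule simple_path_join_loop)
    show "arc (linepath (P!0) (P!1))" using P01 by simp
    show "arc (chainp L)" using gc by (rule good_chain_arc)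
    show "pathfinish (linepath (P!0) (P!1)) = pathstart (chainp L)" using st by simp
    show "pathfinish (chainp L) = pathstart (linepath (P!0) (P!1))" using fi by simp
    show "path_image (linepath (P!0) (P!1)) \<inter> path_image (chainp L) \<subseteq> {pathstart (linepath (P!0) (P!1)), pathstart (chainp L)}"
    proof
      fix x assume x: "x \<in> path_image (linepath (P!0) (P!1)) \<inter> path_image (chainp L)"
      then obtain i where i: "i < n - 1" "x \<in> poly_edge P (Suc i)" using imL by auto
      have "x \<in> poly_edge P 0" using x e0 by simp
      moreover have "Suc i < length P" "P \<noteq> []" using i n_def n3 by auto
      ultimately have "x \<in> {P!0, P!Suc i}" using simple_polygon_edges[OF sp, of 0 "Suc i"] i by blast
      moreover have "x = P!Suc i \<Longrightarrow> x \<in> {P!0, P!1}"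
      proof -
        assume xs: "x = P!Suc i"
        have "(if Suc 0 mod n = Suc i then poly_edge P 0 \<inter> poly_edge P (Suc i) = {P ! Suc i}
         else if Suc (Suc i) mod n = 0 then poly_edge P 0 \<inter> poly_edge P (Suc i) = {P ! 0}
         else poly_edge P 0 \<inter> poly_edge P (Suc i) = {})"
          unfolding n_def by (rule simple_polygon_H[OF sp]) (use \<open>Suc i < length P\<close> in auto)
        moreover have "Suc 0 mod n = 1" using n3 by simp
        ultimately show ?thesis using xs \<open>x \<in> poly_edge P 0\<close> i by (auto split: if_splits)
      qed
      ultimately show "x \<in> {pathstart (linepath (P!0) (P!1)), pathstart (chainp L)}" using st by auto
    qed
  qed
  moreover have "pathfinish g = pathstart g" unfolding g_def using fi by simp
  ultimately show ?thesis using that img by blast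
qed

definition cplx :: "pt \<Rightarrow> complex" where "cplx z = Complex (fst z) (snd z)"
definition uncplx :: "complex \<Rightarrow> pt" where "uncplx z = (Re z, Im z)"

lemma linear_cplx: "linear cplx"
  by (rule linearI) (auto simp: cplx_def complex_eq_iff)

lemma linear_uncplx: "linear uncplx"
  by (rule linearI) (auto simp: uncplx_def)

lemma uncplx_cplx [simp]: "uncplx (cplx z) = z" by (simp add: cplx_def uncplx_def)
lemma cplx_uncplx [simp]: "cplx (uncplx z) = z" by (simp add: cplx_def uncplx_def)

lemma inj_cplx: "inj cplx" by (metis injI uncplx_cplx)

lemma cc_cplx:
  "connected_component (- (cplx ` S)) (cplx x) (cplx y) \<longleftrightarrow> connected_component (- S) x y"
proof
  assume "connected_component (- (cplx ` S)) (cplx x) (cplx y)"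
  then obtain T where T: "connected T" "T \<subseteq> - (cplx ` S)" "cplx x \<in> T" "cplx y \<in> T"
    unfolding connected_component_def by blast
  have "connected (uncplx ` T)" using T(1) linear_uncplx by (rule connected_linear_image[rotated])
  moreover have "uncplx ` T \<subseteq> - S"
  proof
    fix t assume "t \<in> uncplx ` T"
    then obtain t' where t': "t' \<in> T" "t = uncplx t'" by blast
    show "t \<in> - S"
    proof
      assume "t \<in> S" then have "cplx t \<in> cplx ` S" by blast
      then show False using t' T(2) by auto
    qed
  qed
  moreover have "x \<in> uncplx ` T" "y \<in> uncplx ` T" using T(3,4) by (metis image_eqI uncplx_cplx)+
  ultimately show "connected_component (- S) x y" unfolding connected_component_def by blast
next
  assume "connected_component (- S) x y"
  then obtain T where T: "connected T" "T \<subseteq> - S" "x \<in> T" "y \<in> T"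
    unfolding connected_component_def by blast
  have "connected (cplx ` T)" using T(1) linear_cplx by (rule connected_linear_image[rotated])
  moreover have "cplx ` T \<subseteq> - (cplx ` S)" using T(2) inj_cplx by (auto simp: inj_eq)
  moreover have "cplx x \<in> cplx ` T" "cplx y \<in> cplx ` T" using T(3,4) by blast+
  ultimately show "connected_component (- (cplx ` S)) (cplx x) (cplx y)" unfolding connected_component_def by blast
qed

lemma ccs_cplx:
  "connected_component_set (- (cplx ` S)) (cplx x) = cplx ` connected_component_set (- S) x"
proof
  show "connected_component_set (- (cplx ` S)) (cplx x) \<subseteq> cplx ` connected_component_set (- S) x"
  proof
    fix z assume "z \<in> connected_component_set (- (cplx ` S)) (cplx x)"
    then have "connected_component (- (cplx ` S)) (cplx x) (cplx (uncplx z))" by simp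
    then have "uncplx z \<in> connected_component_set (- S) x" by (metis cc_cplx mem_Collect_eq)
    then show "z \<in> cplx ` connected_component_set (- S) x" by (metis cplx_uncplx image_eqI)
  qed
  show "cplx ` connected_component_set (- S) x \<subseteq> connected_component_set (- (cplx ` S)) (cplx x)"
  proof
    fix z assume "z \<in> cplx ` connected_component_set (- S) x"
    then obtain y where y: "y \<in> connected_component_set (- S) x" "z = cplx y" by blast
    then show "z \<in> connected_component_set (- (cplx ` S)) (cplx x)" using cc_cplx[of S x y] by simp
  qed
qed

lemma bounded_cplx: "bounded (cplx ` X) \<longleftrightarrow> bounded X"
proof
  assume "bounded (cplx ` X)"
  then have "bounded (uncplx ` cplx ` X)"
    using bounded_linear_image linear_uncplx linear_conv_bounded_linear by blast
  then show "bounded X" by (simp add: image_image)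
next
  assume "bounded X" then show "bounded (cplx ` X)"
    using bounded_linear_image linear_cplx linear_conv_bounded_linear by blast
qed

lemma inside_cplx: "inside (cplx ` S) = cplx ` inside S"
proof
  show "inside (cplx ` S) \<subseteq> cplx ` inside S"
  proof
    fix z assume z: "z \<in> inside (cplx ` S)"
    obtain y where z': "z = cplx y" by (metis cplx_uncplx)
    have "y \<in> inside S"
      using z unfolding inside_def z'
      by (auto simp: ccs_cplx bounded_cplx inj_cplx inj_image_mem_iff)
    then show "z \<in> cplx ` inside S" using z' by blast
  qed
  show "cplx ` inside S \<subseteq> inside (cplx ` S)"
  proof
    fix z assume "z \<in> cplx ` inside S"
    then obtain y where y: "y \<in> inside S" "z = cplx y" by blast
    have "cplx y \<notin> cplx ` S" using y(1) unfolding inside_def by (simp add: inj_cplx inj_image_mem_iff)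
    moreover have "bounded (connected_component_set (- (cplx ` S)) (cplx y))"
      using y(1) unfolding inside_def ccs_cplx bounded_cplx by simp
    ultimately show "z \<in> inside (cplx ` S)" unfolding inside_def y(2) by simp
  qed
qed

lemma poly_boundary_closure:
  assumes "simple_polygon P"
  shows "poly_boundary P \<subseteq> closure (poly_interior P)"
proof -
  obtain g where g: "simple_path g" "pathfinish g = pathstart g" "path_image g = poly_boundary P"
    using polygon_path[OF assms] by blast
  have "simple_path (cplx \<circ> g)" using g(1) simple_path_linear_image_eq[OF linear_cplx inj_cplx] by simp
  moreover have "pathfinish (cplx \<circ> g) = pathstart (cplx \<circ> g)" using g(2) by (simp add: pathfinish_compose pathstart_compose)
  ultimately have "frontier (inside (path_image (cplx \<circ> g))) = path_image (cplx \<circ> g)"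
    using Jordan_inside_outside by blast
  moreover have "path_image (cplx \<circ> g) = cplx ` poly_boundary P" using g(3) by (simp add: path_image_compose)
  ultimately have "cplx ` poly_boundary P = frontier (cplx ` poly_interior P)"
    by (metis inside_cplx poly_interior_def)
  then have "cplx ` poly_boundary P \<subseteq> closure (cplx ` poly_interior P)"
    by (simp add: frontier_def)
  also have "\<dots> = cplx ` closure (poly_interior P)"
    using closure_injective_linear_image[OF linear_cplx inj_cplx] by simp
  finally show ?thesis using inj_cplx by (auto simp: inj_image_subset_iff)
qed


lemma cross_seg0:
  assumes "x \<in> closed_segment c1 c2"
  shows "cross (c2 - c1) (x - c1) = 0"
proof -
  obtain u where x: "x = (1 - u) *\<^sub>R c1 + u *\<^sub>R c2" using assms in_segment(1) by blast
  show ?thesis unfolding x by (simp add: cross_def algebra_simps)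
qed

lemma convex_halfplane_cross:
  "convex {X. \<sigma> * cross d (X - c) > (0::real)}"
proof (rule convexI)
  fix x y :: pt and u v :: real
  assume x: "x \<in> {X. \<sigma> * cross d (X - c) > 0}" and y: "y \<in> {X. \<sigma> * cross d (X - c) > 0}"
    and uv: "0 \<le> u" "0 \<le> v" "u + v = 1"
  have e: "\<sigma> * cross d (u *\<^sub>R x + v *\<^sub>R y - c) = u * (\<sigma> * cross d (x - c)) + v * (\<sigma> * cross d (y - c))"
  proof -
    have v: "v = 1 - u" using uv(3) by simp
    show ?thesis unfolding v by (simp add: cross_def algebra_simps)
  qed
  have "u * (\<sigma> * cross d (x - c)) + v * (\<sigma> * cross d (y - c)) > 0"
  proof (cases "u = 0")
    case True then show ?thesis using uv y by simp
  next
    case False then have "u > 0" using uv by simp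
    then show ?thesis using x y uv by (simp add: add_pos_nonneg)
  qed
  then show "u *\<^sub>R x + v *\<^sub>R y \<in> {X. \<sigma> * cross d (X - c) > 0}" using e by simp
qed

lemma LL:
  assumes sp: "simple_polygon P" and i: "i < length P" and eE: "e \<in> poly_edge P i"
    and eV: "e \<notin> set P" and eab: "e \<in> open_segment a b"
    and tr: "cross (P!(Suc i mod length P) - P!i) (b - a) \<noteq> 0"
  shows "closed_segment a b \<inter> poly_interior P \<noteq> {}"
proof -
  define n where "n = length P"
  define c1 where "c1 = P!i"
  define c2 where "c2 = P!(Suc i mod n)"
  define d where "d = c2 - c1"
  define B where "B = poly_boundary P"
  define Ins where "Ins = poly_interior P"
  define cr where "cr X = cross d (X - c1)" for X
  define F where "F = (\<Union>j\<in>{j. j < n \<and> j \<noteq> i}. poly_edge P j)"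
  have eF: "e \<notin> F"
  proof
    assume "e \<in> F"
    then obtain j where j: "j < n" "j \<noteq> i" "e \<in> poly_edge P j" unfolding F_def by blast
    then have "e \<in> {P!i, P!j}" using simple_polygon_edges[OF sp i, of j] eE n_def by auto
    then show False using eV i j n_def by auto
  qed
  have cF: "closed F" unfolding F_def poly_edge_def by (intro closed_UN) auto
  obtain \<delta> where \<delta>: "\<delta> > 0" "ball e \<delta> \<subseteq> - F"
    using cF eF open_contains_ball[of "- F"] by (metis ComplI open_Compl)
  have cB: "closed B" unfolding B_def poly_boundary_def poly_edge_def by (intro closed_UN) auto
  have eB: "e \<in> B" unfolding B_def poly_boundary_def using eE i by blast
  have "e \<in> closure Ins" using poly_boundary_closure[OF sp] eB unfolding B_def Ins_def by blast
  then obtain q where q: "q \<in> Ins" "dist q e < \<delta>" using \<delta>(1) closure_approachable by blast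
  have oI: "open Ins" unfolding Ins_def poly_interior_def using open_inside cB B_def by blast
  obtain \<epsilon> where \<epsilon>: "\<epsilon> > 0" "ball q \<epsilon> \<subseteq> Ins" using oI q(1) open_contains_ball by blast
  have d0: "d \<noteq> 0"
  proof
    assume "d = 0"
    then have "cross d (b - a) = 0" by (simp add: cross_def)
    then show False using tr unfolding d_def c1_def c2_def n_def by simp
  qed
  have crL: "cr (X + t *\<^sub>R Y) = cr X + t * cross d Y" for X Y t
    unfolding cr_def by (simp add: cross_def algebra_simps)
  obtain q' where q': "q' \<in> Ins" "dist q' e < \<delta>" "cr q' \<noteq> 0"
  proof (cases "cr q = 0")
    case False then show ?thesis using that q by blast
  next
    case True
    define nr where "nr = (- snd d, fst d)"
    have nrpos: "cross d nr > 0" unfolding nr_def cross_def using d0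
      by (simp add: sum_power2_gt_zero_iff prod_eq_iff power2_eq_square[symmetric])
    have nn: "norm nr > 0" using nrpos by (auto simp: nr_def cross_def prod_eq_iff)
    define m where "m = min \<epsilon> (\<delta> - dist q e)"
    have m: "m > 0" using \<epsilon> q by (simp add: m_def)
    define t where "t = m / (2 * norm nr)"
    have t: "t > 0" using m nn by (simp add: t_def)
    have tn: "t * norm nr < m" using m nn by (simp add: t_def)
    define q2 where "q2 = q + t *\<^sub>R nr"
    have dq: "dist q2 q = t * norm nr" unfolding q2_def dist_norm using t by simp
    have "q2 \<in> ball q \<epsilon>" using dq tn unfolding m_def by (simp add: dist_commute)
    moreover have "dist q2 e < \<delta>" using dq tn dist_triangle[of q2 e q] unfolding m_def by linarith
    moreover have "cr q2 \<noteq> 0" unfolding q2_def crL using True t nrpos by simp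
    ultimately show ?thesis using that \<epsilon>(2) by blast
  qed
  define \<sigma> where "\<sigma> = sgn (cr q')"
  define H where "H = ball e \<delta> \<inter> {X. \<sigma> * cross d (X - c1) > 0}"
  have cH: "connected H" unfolding H_def
    by (intro convex_connected convex_Int convex_ball convex_halfplane_cross)
  have HB: "H \<subseteq> - B"
  proof
    fix X assume X: "X \<in> H"
    show "X \<in> - B"
    proof
      assume "X \<in> B"
      then obtain j where j: "j < n" "X \<in> poly_edge P j" unfolding B_def poly_boundary_def n_def by blast
      show False
      proof (cases "j = i")
        case True
        then have "cross d (X - c1) = 0" using j cross_seg0 unfolding poly_edge_def d_def c1_def c2_def n_def by blast
        then show False using X unfolding H_def by simp
      next
        case False
        then have "X \<in> F" unfolding F_def using j by blast
        then show False using X \<delta>(2) unfolding H_def by blast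
      qed
    qed
  qed
  have q'H: "q' \<in> H" unfolding H_def \<sigma>_def using q' by (simp add: dist_commute cr_def[symmetric]) (metis abs_sgn mult.commute zero_less_abs_iff)
  have HI: "H \<subseteq> Ins"
  proof
    fix X assume "X \<in> H"
    then have "connected_component (- B) q' X" unfolding connected_component_def using cH HB q'H by blast
    then show "X \<in> Ins" using inside_same_component q'(1) unfolding Ins_def poly_interior_def B_def by blast
  qed
  obtain u where u: "0 < u" "u < 1" "e = (1 - u) *\<^sub>R a + u *\<^sub>R b" "a \<noteq> b" using eab in_segment(2) by blast
  define c where "c = cross d (b - a)"
  have c0: "c \<noteq> 0" using tr unfolding c_def d_def c1_def c2_def n_def .
  have nba: "norm (b - a) > 0" using u(4) by simp
  define \<tau> where "\<tau> = min (min u (1 - u)) (\<delta> / norm (b - a)) / 2"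
  have \<tau>: "\<tau> > 0" "\<tau> < u" "\<tau> < 1 - u" "\<tau> * norm (b - a) < \<delta>"
  proof -
    define m where "m = min (min u (1 - u)) (\<delta> / norm (b - a))"
    have m: "m > 0" "m \<le> u" "m \<le> 1 - u" "m \<le> \<delta> / norm (b - a)" using u \<delta>(1) nba by (auto simp: m_def)
    have "m * norm (b - a) \<le> \<delta>" using m(4) nba by (simp add: field_simps)
    then show "\<tau> > 0" "\<tau> < u" "\<tau> < 1 - u" "\<tau> * norm (b - a) < \<delta>"
      using m \<delta>(1) nba unfolding \<tau>_def m_def[symmetric] by auto
  qed
  define t where "t = \<sigma> * sgn c * \<tau>"
  have s1: "\<sigma> * \<sigma> = 1" unfolding \<sigma>_def using q'(3) by (simp add: sgn_mult_self_eq abs_sgn_eq)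
  have at: "\<bar>t\<bar> = \<tau>" unfolding t_def using q'(3) c0 \<tau>(1) \<sigma>_def by (simp add: abs_mult abs_sgn_eq)
  define X where "X = e + t *\<^sub>R (b - a)"
  have cre: "cr e = 0" unfolding cr_def d_def c1_def c2_def using cross_seg0 eE unfolding poly_edge_def n_def by blast
  have "\<sigma> * cross d (X - c1) = \<sigma> * (t * c)" using crL[of e t "b - a"] cre unfolding X_def cr_def c_def by simp
  also have "\<dots> = (\<sigma> * \<sigma>) * (sgn c * c) * \<tau>" unfolding t_def by (simp add: algebra_simps)
  also have "\<dots> = \<bar>c\<bar> * \<tau>" using s1 by (simp add: sgn_mult_self_eq abs_sgn)
  finally have "\<sigma> * cross d (X - c1) > 0" using c0 \<tau>(1) by simp
  moreover have "dist e X < \<delta>" unfolding X_def dist_norm using at \<tau>(4) by simp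
  ultimately have "X \<in> H" unfolding H_def by simp
  then have "X \<in> Ins" using HI by blast
  moreover have "X \<in> closed_segment a b"
  proof -
    have "X = (1 - (u + t)) *\<^sub>R a + (u + t) *\<^sub>R b" unfolding X_def u(3) by (simp add: algebra_simps)
    moreover have "0 \<le> u + t" "u + t \<le> 1" using at \<tau> by linarith+
    ultimately show ?thesis unfolding in_segment(1) by blast
  qed
  ultimately show ?thesis unfolding Ins_def by blast
qed


lemma tri_real:
  fixes A0 A1 A2 B0 B1 B2 C0 C1 C2 D0 D1 D2 P0 P1 P2 :: real
  assumes "min A0 B0 \<le> P0" "P0 \<le> max A0 B0" "min A1 B1 \<le> P1" "P1 \<le> max A1 B1" "min A2 B2 \<le> P2" "P2 \<le> max A2 B2"
    "min C0 D0 \<le> P0" "P0 \<le> max C0 D0" "min C1 D1 \<le> P1" "P1 \<le> max C1 D1" "min C2 D2 \<le> P2" "P2 \<le> max C2 D2"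
  shows "(C0 \<le> max A0 B0 \<and> C1 \<le> max A1 B1 \<and> C2 \<le> max A2 B2) \<or>
         (D0 \<le> max A0 B0 \<and> D1 \<le> max A1 B1 \<and> D2 \<le> max A2 B2) \<or>
         (A0 \<le> max C0 D0 \<and> A1 \<le> max C1 D1 \<and> A2 \<le> max C2 D2) \<or>
         (B0 \<le> max C0 D0 \<and> B1 \<le> max C1 D1 \<and> B2 \<le> max C2 D2)"
  using assms unfolding max_def min_def by smt

definition lk :: "nat \<Rightarrow> pt \<Rightarrow> real" where "lk k X = dot X (cone_dir k)"

lemma cone_dir_0: "cone_dir 0 = (0, 1)"
  by (simp add: cone_dir_def)

lemma cone_dir_2: "cone_dir 2 = (- (sqrt 3 / 2), - (1/2))"
proof -
  have "pi / 2 + real 2 * pi / 3 = pi / 6 + pi" by simp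
  then show ?thesis unfolding cone_dir_def by (simp only: cos_periodic_pi sin_periodic_pi cos_30 sin_30)
qed

lemma cone_dir_4: "cone_dir 4 = (sqrt 3 / 2, - (1/2))"
proof -
  have "pi / 2 + real 4 * pi / 3 = (- (pi / 6)) + 2 * pi" by simp
  then show ?thesis unfolding cone_dir_def by (simp only: cos_periodic sin_periodic cos_minus sin_minus cos_30 sin_30)
qed

lemma lk0: "lk 0 X = snd X" by (simp add: lk_def dot_def cone_dir_0)
lemma lk2: "lk 2 X = - (sqrt 3 / 2) * fst X - snd X / 2" by (simp add: lk_def dot_def cone_dir_2)
lemma lk4: "lk 4 X = (sqrt 3 / 2) * fst X - snd X / 2" by (simp add: lk_def dot_def cone_dir_4)

lemma lk_sum: "lk 0 X + lk 2 X + lk 4 X = 0" by (simp add: lk0 lk2 lk4)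

lemma lk_lin: "lk k (X + t *\<^sub>R Y) = lk k X + t * lk k Y" "lk k (X - Y) = lk k X - lk k Y"
  by (simp_all add: lk_def dot_def algebra_simps)

lemma s3: "sqrt 3 * sqrt 3 = (3::real)" by simp

lemma AB_cone:
  fixes A B :: real
  shows "(A \<ge> sqrt (A\<^sup>2 + B\<^sup>2) * (sqrt 3 / 2)) \<longleftrightarrow> (A \<ge> sqrt 3 * B \<and> A \<ge> - (sqrt 3 * B))"
proof -
  define r where "r = sqrt (A\<^sup>2 + B\<^sup>2)"
  have r0: "r \<ge> 0" and r2: "r * r = A\<^sup>2 + B\<^sup>2" unfolding r_def by (simp_all add: add_nonneg_nonneg)
  define s where "s = sqrt (3::real)"
  have s0: "s > 0" and s2: "s * s = 3" unfolding s_def by simp_all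
  have "(A \<ge> r * (s / 2)) \<longleftrightarrow> (A \<ge> 0 \<and> 4 * A\<^sup>2 \<ge> 3 * (A\<^sup>2 + B\<^sup>2))"
  proof
    assume h: "A \<ge> r * (s / 2)"
    have rs: "r * (s / 2) \<ge> 0" using r0 s0 by simp
    then have "A \<ge> 0" using h by linarith
    moreover have "(r * (s / 2))\<^sup>2 \<le> A\<^sup>2" using h rs by (simp add: power_mono)
    moreover have "(r * (s / 2))\<^sup>2 = (r * r) * (s * s) / 4" by (simp add: power2_eq_square)
    ultimately show "A \<ge> 0 \<and> 4 * A\<^sup>2 \<ge> 3 * (A\<^sup>2 + B\<^sup>2)" using r2 s2 by simp
  next
    assume h: "A \<ge> 0 \<and> 4 * A\<^sup>2 \<ge> 3 * (A\<^sup>2 + B\<^sup>2)"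
    have "(r * (s / 2))\<^sup>2 = (r * r) * (s * s) / 4" by (simp add: power2_eq_square)
    then have "(r * (s / 2))\<^sup>2 \<le> A\<^sup>2" using h r2 s2 by simp
    then show "A \<ge> r * (s / 2)" using h using power2_le_imp_le by blast
  qed
  also have "\<dots> \<longleftrightarrow> (A \<ge> s * B \<and> A \<ge> - (s * B))"
  proof
    assume h: "A \<ge> 0 \<and> 4 * A\<^sup>2 \<ge> 3 * (A\<^sup>2 + B\<^sup>2)"
    then have "(s * \<bar>B\<bar>)\<^sup>2 \<le> A\<^sup>2" using s2 by (simp add: power2_eq_square algebra_simps)
    then have "s * \<bar>B\<bar> \<le> A" using h using power2_le_imp_le by blast
    then show "A \<ge> s * B \<and> A \<ge> - (s * B)" 
    proof -
      have "s * B \<le> s * \<bar>B\<bar>" "s * (-B) \<le> s * \<bar>B\<bar>" using s0 mult_left_mono[of B "\<bar>B\<bar>" s] mult_left_mono[of "-B" "\<bar>B\<bar>" s] by simp_all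
      then show ?thesis using \<open>s * \<bar>B\<bar> \<le> A\<close> by simp
    qed
  next
    assume h: "A \<ge> s * B \<and> A \<ge> - (s * B)"
    then have sb: "s * \<bar>B\<bar> \<le> A" by (simp add: abs_if)
    then have A0: "A \<ge> 0" using s0 by (meson abs_ge_zero dual_order.trans mult_nonneg_nonneg less_imp_le)
    have "(s * \<bar>B\<bar>)\<^sup>2 \<le> A\<^sup>2" using sb s0 by (intro power_mono) auto
    then have "3 * B\<^sup>2 \<le> A\<^sup>2" using s2 by (simp add: power2_eq_square algebra_simps)
    then show "A \<ge> 0 \<and> 4 * A\<^sup>2 \<ge> 3 * (A\<^sup>2 + B\<^sup>2)" using A0 by simp
  qed
  finally show ?thesis unfolding r_def s_def .
qed

lemma norm_pt: "norm (X::pt) = sqrt ((fst X)\<^sup>2 + (snd X)\<^sup>2)"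
  by (cases X) (simp add: norm_Pair)

lemma in_cone_iff:
  assumes k: "k \<in> {0, 2, 4}"
  shows "in_cone k u v \<longleftrightarrow> v \<noteq> u \<and> (\<forall>j\<in>{0,2,4}. j \<noteq> k \<longrightarrow> lk j (v - u) \<le> 0)"
proof -
  define x where "x = fst (v - u)"
  define y where "y = snd (v - u)"
  define s where "s = sqrt (3::real)"
  have s2: "s * s = 3" unfolding s_def by simp
  have nrm: "norm (v - u) = sqrt (x\<^sup>2 + y\<^sup>2)" unfolding x_def y_def norm_pt ..
  have ic: "in_cone k u v \<longleftrightarrow> v \<noteq> u \<and> lk k (v - u) \<ge> sqrt (x\<^sup>2 + y\<^sup>2) * (s / 2)"
    unfolding in_cone_def lk_def nrm s_def cos_30 ..
  have L0: "lk 0 (v - u) = y" unfolding y_def lk0 ..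
  have L2: "lk 2 (v - u) = - (s / 2) * x - y / 2" unfolding x_def y_def s_def lk2 ..
  have L4: "lk 4 (v - u) = (s / 2) * x - y / 2" unfolding x_def y_def s_def lk4 ..
  consider "k = 0" | "k = 2" | "k = 4" using k by auto
  then show ?thesis
  proof cases
    case 1
    have "(lk k (v - u) \<ge> sqrt (x\<^sup>2 + y\<^sup>2) * (s / 2)) \<longleftrightarrow> (y \<ge> s * x \<and> y \<ge> - (s * x))"
      using AB_cone[of y x] unfolding 1 L0 s_def by (simp add: add.commute)
    also have "\<dots> \<longleftrightarrow> (\<forall>j\<in>{0,2,4}. j \<noteq> k \<longrightarrow> lk j (v - u) \<le> 0)"
      unfolding 1 using L2 L4 by (auto simp: field_simps)
    finally show ?thesis using ic by blast
  next
    case 2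
    define A where "A = - (s * x + y) / 2"
    define B where "B = (x - s * y) / 2"
    have AB: "A\<^sup>2 + B\<^sup>2 = x\<^sup>2 + y\<^sup>2" unfolding A_def B_def power2_eq_square
      using s2 by (simp add: field_simps; simp add: mult.assoc[symmetric])
    have "(lk k (v - u) \<ge> sqrt (x\<^sup>2 + y\<^sup>2) * (s / 2)) \<longleftrightarrow> (A \<ge> s * B \<and> A \<ge> - (s * B))"
    proof -
      have LA: "lk k (v - u) = A" unfolding 2 L2 A_def by (simp add: field_simps)
      show ?thesis using AB_cone[of A B] unfolding LA AB s_def by simp
    qed
    also have "\<dots> \<longleftrightarrow> (\<forall>j\<in>{0,2,4}. j \<noteq> k \<longrightarrow> lk j (v - u) \<le> 0)"
    proof -
      have e1: "A + s * B = - 2 * y" unfolding A_def B_def using s2 by (simp add: field_simps; simp add: mult.assoc[symmetric])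
      have e2: "A - s * B = - 2 * ((s / 2) * x - y / 2)" unfolding A_def B_def using s2 by (simp add: field_simps; simp add: mult.assoc[symmetric])
      show ?thesis unfolding 2 using L0 L4 e1 e2 by auto
    qed
    finally show ?thesis using ic by blast
  next
    case 3
    define A where "A = (s * x - y) / 2"
    define B where "B = (x + s * y) / 2"
    have AB: "A\<^sup>2 + B\<^sup>2 = x\<^sup>2 + y\<^sup>2" unfolding A_def B_def power2_eq_square
      using s2 by (simp add: field_simps; simp add: mult.assoc[symmetric])
    have "(lk k (v - u) \<ge> sqrt (x\<^sup>2 + y\<^sup>2) * (s / 2)) \<longleftrightarrow> (A \<ge> s * B \<and> A \<ge> - (s * B))"
    proof -
      have LA: "lk k (v - u) = A" unfolding 3 L4 A_def by (simp add: field_simps)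
      show ?thesis using AB_cone[of A B] unfolding LA AB s_def by simp
    qed
    also have "\<dots> \<longleftrightarrow> (\<forall>j\<in>{0,2,4}. j \<noteq> k \<longrightarrow> lk j (v - u) \<le> 0)"
    proof -
      have e1: "A - s * B = - 2 * y" unfolding A_def B_def using s2 by (simp add: field_simps; simp add: mult.assoc[symmetric])
      have e2: "A + s * B = - 2 * (- (s / 2) * x - y / 2)" unfolding A_def B_def using s2 by (simp add: field_simps; simp add: mult.assoc[symmetric])
      show ?thesis unfolding 3 using L0 L2 e1 e2 by auto
    qed
    finally show ?thesis using ic by blast
  qed
qed

lemma gp_cross:
  assumes "general_position V" "p \<in> V" "q \<in> V" "r \<in> V" "p \<noteq> q" "q \<noteq> r" "p \<noteq> r"
  shows "cross (q - p) (r - p) \<noteq> 0"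
  using assms unfolding general_position_def by blast

lemma gp_lk:
  assumes gp: "general_position V" and "p \<in> V" "q \<in> V" "p \<noteq> q" and k: "k \<in> {0, 2, 4}"
  shows "lk k (q - p) \<noteq> 0"
proof -
  have H: "cross (q - p) (cos (real j * pi / 3), sin (real j * pi / 3)) \<noteq> 0" if "j \<in> {0,1,2}" for j
    using assms that unfolding general_position_def by blast
  consider "k = 0" | "k = 2" | "k = 4" using k by auto
  then show ?thesis
  proof cases
    case 1
    then show ?thesis using H[of 0] by (simp add: lk0 cross_def)
  next
    case 2
    have a: "real 2 * pi / 3 = pi - pi / 3" by simp
    have "cos (real 2 * pi / 3) = cos (pi - pi / 3)" "sin (real 2 * pi / 3) = sin (pi - pi / 3)"
      by (rule arg_cong[where f=cos], simp) (rule arg_cong[where f=sin], simp)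
    then have "cos (real 2 * pi / 3) = - (1/2)" "sin (real 2 * pi / 3) = sqrt 3 / 2"
      by (simp_all only: cos_pi_minus sin_pi_minus cos_60 sin_60)
    then have "cross (q - p) (- (1/2), sqrt 3 / 2) \<noteq> 0" using H[of 2] by (simp only:) simp
    then show ?thesis using 2 by (simp add: lk2 cross_def field_simps)
  next
    case 3
    have "cross (q - p) (1/2, sqrt 3 / 2) \<noteq> 0" using H[of 1] by (simp add: cos_60 sin_60)
    then show ?thesis using 3 by (simp add: lk4 cross_def field_simps)
  qed
qed


lemma cr2:
  fixes px py zx zy yx yy D :: real
  assumes "D = px*zy - py*zx" "D \<noteq> 0"
  shows "yx = ((yx*zy - yy*zx)/D)*px + ((px*yy - py*yx)/D)*zx"
    "yy = ((yx*zy - yy*zx)/D)*py + ((px*yy - py*yx)/D)*zy"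
proof -
  have "yx * D = (yx*zy - yy*zx)*px + (px*yy - py*yx)*zx" "yy * D = (yx*zy - yy*zx)*py + (px*yy - py*yx)*zy"
    unfolding assms(1) by (simp_all add: algebra_simps)
  then show "yx = ((yx*zy - yy*zx)/D)*px + ((px*yy - py*yx)/D)*zx"
    "yy = ((yx*zy - yy*zx)/D)*py + ((px*yy - py*yx)/D)*zy" using assms(2)
    by (simp_all add: field_simps)
qed

lemma cross_scaleR: "cross (t *\<^sub>R a) b = t * cross a b" "cross a (t *\<^sub>R b) = t * cross a b"
  by (simp_all add: cross_def algebra_simps)

lemma cross_add: "cross (a + b) c = cross a c + cross b c" "cross c (a + b) = cross c a + cross c b"
  "cross (a - b) c = cross a c - cross b c" "cross c (a - b) = cross c a - cross c b"
  by (simp_all add: cross_def algebra_simps)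

lemma cross_self: "cross a a = 0" by (simp add: cross_def)
lemma cross_anti: "cross a b = - cross b a" by (simp add: cross_def)

lemma exit_real:
  fixes a1 a2 a3 x1 x2 x3 :: real
  assumes a: "a1 > 0" "a2 > 0" "a3 > 0" and x3: "x3 > 0" and x12: "x1 < 0 \<or> x2 < 0"
  shows "\<exists>l. 0 < l \<and> l < 1 \<and> (1 - l) * a1 + l * x1 \<ge> 0 \<and> (1 - l) * a2 + l * x2 \<ge> 0 \<and>
     (1 - l) * a3 + l * x3 > 0 \<and> ((1 - l) * a1 + l * x1 = 0 \<or> (1 - l) * a2 + l * x2 = 0)"
proof -
  define l1 where "l1 = (if x1 < 0 then a1 / (a1 - x1) else 1)"
  define l2 where "l2 = (if x2 < 0 then a2 / (a2 - x2) else 1)"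
  have l1: "0 < l1" "l1 \<le> 1" "x1 < 0 \<Longrightarrow> l1 < 1" "x1 < 0 \<Longrightarrow> a1 - l1 * (a1 - x1) = 0"
    unfolding l1_def using a by (auto simp: field_simps)
  have l2: "0 < l2" "l2 \<le> 1" "x2 < 0 \<Longrightarrow> l2 < 1" "x2 < 0 \<Longrightarrow> a2 - l2 * (a2 - x2) = 0"
    unfolding l2_def using a by (auto simp: field_simps)
  define l where "l = min l1 l2"
  have l: "0 < l" "l < 1" "l \<le> l1" "l \<le> l2" unfolding l_def using l1 l2 x12 by auto
  have g: "(1 - l) * a + l * x \<ge> 0" if "a > 0" "x < 0 \<Longrightarrow> a - lj * (a - x) = 0" "l \<le> lj" for a x lj :: real
  proof (cases "x < 0")
    case True
    have "l * (a - x) \<le> lj * (a - x)" using True that(1,3) by (intro mult_right_mono) auto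
    then show ?thesis using that(2)[OF True] by (simp add: algebra_simps)
  next
    case False then show ?thesis using that(1) l by (simp add: add_nonneg_nonneg)
  qed
  have g1: "(1 - l) * a1 + l * x1 \<ge> 0" using g[OF a(1) l1(4) l(3)] .
  have g2: "(1 - l) * a2 + l * x2 \<ge> 0" using g[OF a(2) l2(4) l(4)] .
  have g3: "(1 - l) * a3 + l * x3 > 0" using a(3) x3 l by (simp add: add_pos_pos)
  have z: "(1 - l) * a1 + l * x1 = 0 \<or> (1 - l) * a2 + l * x2 = 0"
  proof (cases "l1 \<le> l2")
    case True
    then have "l = l1" unfolding l_def by simp
    then have "x1 < 0" using l(2) l1_def by (auto split: if_splits)
    then show ?thesis using l1(4) \<open>l = l1\<close> by (simp add: algebra_simps)
  next
    case False
    then have "l = l2" unfolding l_def by simp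
    then have "x2 < 0" using l(2) l2_def by (auto split: if_splits)
    then show ?thesis using l2(4) \<open>l = l2\<close> by (simp add: algebra_simps)
  qed
  show ?thesis using l g1 g2 g3 z by blast
qed

lemma par3:
  assumes "d \<noteq> 0" "cross d a = 0" "cross d b = 0"
  shows "cross a b = 0"
proof -
  have "cross a b * fst d = fst a * cross d b - fst b * cross d a"
    "cross a b * snd d = snd a * cross d b - snd b * cross d a" by (simp_all add: cross_def algebra_simps)
  then have "cross a b * fst d = 0" "cross a b * snd d = 0" using assms(2,3) by simp_all
  then show ?thesis using assms(1) by (auto simp: prod_eq_iff)
qed

lemma seg_diff:
  assumes "x \<in> closed_segment c1 c2" "y \<in> closed_segment c1 c2"
  shows "\<exists>s. x - y = s *\<^sub>R (c2 - c1)"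
proof -
  obtain a where a: "x = (1 - a) *\<^sub>R c1 + a *\<^sub>R c2" using assms(1) in_segment(1) by blast
  obtain b where b: "y = (1 - b) *\<^sub>R c1 + b *\<^sub>R c2" using assms(2) in_segment(1) by blast
  have "x - y = (a - b) *\<^sub>R (c2 - c1)" unfolding a b by (simp add: algebra_simps)
  then show ?thesis by blast
qed

locale cfg =
  fixes V :: "pt set" and S :: "pt list set" and u v z z' p :: pt and k :: nat and \<sigma> \<mu> :: real
  assumes os: "obstacle_setting V S" and gp: "general_position V"
    and uV: "u \<in> V" and vV: "v \<in> V" and k: "k \<in> {0, 2, 4}" and icv: "in_cone k u v"
    and vis1: "\<forall>Ob\<in>S. closed_segment u v \<inter> poly_interior Ob = {}"
    and minv: "\<forall>w\<in>V. in_cone k u w \<and> visible S u w \<and> same_subcone S u v w \<longrightarrow> proj k u v \<le> proj k u w"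
    and zV: "z \<in> V" and zu: "z \<noteq> u" and zv: "z \<noteq> v"
    and \<sigma>: "0 < \<sigma>" "\<sigma> < 1" and p\<sigma>: "p = (1 - \<sigma>) *\<^sub>R u + \<sigma> *\<^sub>R v"
    and \<mu>: "0 < \<mu>" "\<mu> < 1" and p\<mu>: "p = (1 - \<mu>) *\<^sub>R z + \<mu> *\<^sub>R z'"
    and vis2: "\<forall>Ob\<in>S. closed_segment z z' \<inter> poly_interior Ob = {}"
    and zT: "\<forall>j\<in>{0,2,4}. lk j z \<le> max (lk j u) (lk j v)"
begin

definition "PP = p - u"
definition "ZZ = z - u"
definition "DD = cross PP ZZ"
definition al :: "pt \<Rightarrow> real" where "al X = cross (X - u) ZZ / DD"
definition be :: "pt \<Rightarrow> real" where "be X = cross PP (X - u) / DD"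

lemma uv: "u \<noteq> v" using icv unfolding in_cone_def by auto

lemma PP_eq: "PP = \<sigma> *\<^sub>R (v - u)" unfolding PP_def by (simp add: p\<sigma> algebra_simps)

lemma cross_vz: "cross (v - u) (z - u) \<noteq> 0"
  using gp_cross[OF gp uV vV zV uv zv[symmetric] zu[symmetric]] .

lemma DD0: "DD \<noteq> 0"
  unfolding DD_def PP_eq ZZ_def cross_scaleR using cross_vz \<sigma> by simp

lemma cramer: "X - u = al X *\<^sub>R PP + be X *\<^sub>R ZZ"
proof -
  have D: "DD = fst PP * snd ZZ - snd PP * fst ZZ" unfolding DD_def cross_def ..
  show ?thesis unfolding al_def be_def prod_eq_iff cross_def
    using cr2[where yx = "fst (X - u)" and yy = "snd (X - u)", OF D DD0] by simp
qed

lemma cramer': "X = u + al X *\<^sub>R PP + be X *\<^sub>R ZZ"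
  using cramer[of X] by (simp add: algebra_simps)

definition mk :: "real \<Rightarrow> real \<Rightarrow> pt" where "mk a b = u + a *\<^sub>R PP + b *\<^sub>R ZZ"

lemma al_mk: "al (mk a b) = a" and be_mk: "be (mk a b) = b"
  using DD0 unfolding al_def be_def mk_def DD_def by (simp_all add: cross_def field_simps)

lemma al_aff: "al ((1 - t) *\<^sub>R X + t *\<^sub>R Y) = (1 - t) * al X + t * al Y"
  and be_aff: "be ((1 - t) *\<^sub>R X + t *\<^sub>R Y) = (1 - t) * be X + t * be Y"
  using DD0 unfolding al_def be_def by (simp_all add: cross_def field_simps)

lemma al_u: "al u = 0" and be_u: "be u = 0" unfolding al_def be_def by (simp_all add: cross_def)
lemma al_p: "al p = 1" and be_p: "be p = 0"
  using DD0 unfolding al_def be_def DD_def PP_def[symmetric] by (simp_all add: cross_def)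
lemma al_z: "al z = 0" and be_z: "be z = 1"
  using DD0 unfolding al_def be_def DD_def ZZ_def[symmetric] by (simp_all add: cross_def)

lemma al_v: "al v = 1 / \<sigma>" and be_v: "be v = 0"
proof -
  have "v - u = (1/\<sigma>) *\<^sub>R PP" using PP_eq \<sigma> by simp
  then show "al v = 1 / \<sigma>" "be v = 0" using DD0 unfolding al_def be_def DD_def by (simp_all add: cross_scaleR cross_self)
qed

lemma finV: "finite V" using os unfolding obstacle_setting_def by blast

definition "WW = {w \<in> V. w \<noteq> u \<and> al w \<ge> 0 \<and> be w \<ge> 0 \<and> al w + be w \<le> 1}"
definition ff :: "pt \<Rightarrow> real" where "ff w = be w / (al w + be w)"

lemma zW: "z \<in> WW" unfolding WW_def using zV zu al_z be_z by simp

lemma W_pos: assumes "w \<in> WW" shows "al w + be w > 0"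
proof -
  have w: "w \<noteq> u" "al w \<ge> 0" "be w \<ge> 0" using assms unfolding WW_def by auto
  show ?thesis
  proof (rule ccontr)
    assume "\<not> al w + be w > 0"
    then have "al w = 0" "be w = 0" using w by auto
    then have "w - u = 0" using cramer[of w] by simp
    then show False using w by simp
  qed
qed

lemma ex_min: "\<exists>w\<in>WW. \<forall>w'\<in>WW. ff w \<le> ff w'"
proof -
  have "finite WW" using finV unfolding WW_def by simp
  moreover have "WW \<noteq> {}" using zW by blast
  ultimately obtain w where "is_arg_min ff (\<lambda>x. x \<in> WW) w" using ex_is_arg_min_if_finite by blast
  then show ?thesis unfolding is_arg_min_def by (metis not_le)
qed

end

locale cfg2 = cfg +
  fixes w :: pt
  assumes wW: "w \<in> WW" and wmin: "\<forall>w'\<in>WW. ff w \<le> ff w'"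
begin

definition "\<phi> = ff w"
definition h2 :: "pt \<Rightarrow> real" where "h2 X = 1 - al X - be X"
definition h3 :: "pt \<Rightarrow> real" where "h3 X = \<phi> * al X - (1 - \<phi>) * be X"

lemma wV: "w \<in> V" "w \<noteq> u" "al w \<ge> 0" "be w \<ge> 0" "al w + be w \<le> 1" using wW unfolding WW_def by auto

lemma alw_be: "al w + be w > 0" using W_pos wW .

lemma phi_def': "\<phi> * (al w + be w) = be w" unfolding \<phi>_def ff_def using alw_be by simp

lemma h3_w: "h3 w = 0" unfolding h3_def using phi_def' by (simp add: algebra_simps)

lemma phi_pos: "\<phi> > 0"
proof (rule ccontr)
  assume "\<not> \<phi> > 0"
  moreover have "\<phi> \<ge> 0" unfolding \<phi>_def ff_def using wV alw_be by simp
  ultimately have "\<phi> = 0" by simp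
  then have bw: "be w = 0" using phi_def' by simp
  then have "w - u = (al w * \<sigma>) *\<^sub>R (v - u)" using cramer[of w] PP_eq by simp
  then have "cross (v - u) (w - u) = 0" by (simp add: cross_scaleR cross_self)
  then have "w = v" using gp_cross[OF gp uV vV wV(1) uv] wV(2) by metis
  then have "al v \<le> 1" using wV(5) bw by simp
  then have "\<sigma> * al v \<le> \<sigma>" using \<sigma> mult_left_mono[of "al v" 1 \<sigma>] by simp
  then show False using al_v \<sigma> by simp
qed

lemma phi_le1: "\<phi> \<le> 1" unfolding \<phi>_def ff_def using wV alw_be by simp

lemma corner:
  assumes "c \<in> V" "be c \<ge> 0" "h2 c \<ge> 0" "h3 c \<ge> 0"
  shows "h3 c = 0"
proof (cases "c = u")
  case True then show ?thesis unfolding h3_def using al_u be_u by simp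
next
  case False
  have "\<phi> * al c \<ge> (1 - \<phi>) * be c" using assms(4) unfolding h3_def by simp
  moreover have "(1 - \<phi>) * be c \<ge> 0" using phi_le1 assms(2) by simp
  ultimately have "al c \<ge> 0" using phi_pos by (meson order_trans zero_le_mult_iff not_le)
  then have cW: "c \<in> WW" unfolding WW_def using assms False unfolding h2_def by simp
  have "\<phi> \<le> ff c" using wmin cW unfolding \<phi>_def by blast
  then have "\<phi> * (al c + be c) \<le> be c" unfolding ff_def using W_pos[OF cW] by (simp add: field_simps)
  then have "h3 c \<le> 0" unfolding h3_def by (simp add: algebra_simps)
  then show ?thesis using assms(4) by simp
qed

definition "II = {X. be X > 0 \<and> h2 X > 0 \<and> h3 X > 0}"

lemma h2_aff: "h2 ((1 - t) *\<^sub>R X + t *\<^sub>R Y) = (1 - t) * h2 X + t * h2 Y"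
  unfolding h2_def al_aff be_aff by (simp add: algebra_simps)
lemma h3_aff: "h3 ((1 - t) *\<^sub>R X + t *\<^sub>R Y) = (1 - t) * h3 X + t * h3 Y"
  unfolding h3_def al_aff be_aff by (simp add: algebra_simps)

definition "c0 = mk ((2 - \<phi>) / 3) (\<phi> / 3)"
lemma c0I: "c0 \<in> II"
  unfolding II_def c0_def h2_def h3_def using phi_pos phi_le1 by (simp add: al_mk be_mk field_simps)

lemma convex_II: "convex II"
proof (rule convexI)
  fix X Y and a b :: real
  assume X: "X \<in> II" and Y: "Y \<in> II" and ab: "0 \<le> a" "0 \<le> b" "a + b = 1"
  have a: "a = 1 - b" using ab by simp
  have pos: "(1 - b) * x + b * y > 0" if "x > 0" "y > 0" for x y :: real
  proof (cases "b = 0")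
    case True then show ?thesis using that by simp
  next
    case False then have "b > 0" using ab by simp
    then show ?thesis using that ab a by (simp add: add_nonneg_pos)
  qed
  show "a *\<^sub>R X + b *\<^sub>R Y \<in> II"
    using X Y unfolding II_def a by (simp add: be_aff h2_aff h3_aff pos)
qed


lemma notII: "c \<in> V \<Longrightarrow> c \<notin> II"
  using corner unfolding II_def by fastforce

lemma be_p_: "h2 p = 0" "h3 p = \<phi>" unfolding h2_def h3_def using al_p be_p by simp_all

lemma zz': "z \<noteq> z'"
proof
  assume "z = z'"
  then have "p = z" using p\<mu> by (simp add: algebra_simps)
  then show False using be_p be_z by simp
qed

lemma p_open_uv: "p \<in> open_segment u v" unfolding in_segment(2) using uv \<sigma> p\<sigma> by blast
lemma p_open_zz: "p \<in> open_segment z z'" unfolding in_segment(2) using zz' \<mu> p\<mu> by blast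

lemma pV: "p \<notin> V"
proof
  assume pV: "p \<in> V"
  have "p - u = \<sigma> *\<^sub>R (v - u)" using PP_eq PP_def by simp
  then have c: "cross (v - u) (p - u) = 0" by (simp add: cross_scaleR cross_self)
  have "p \<noteq> u" using be_p al_p al_u by auto
  moreover have "p \<noteq> v" using al_p al_v \<sigma> by auto
  ultimately show False using gp_cross[OF gp uV vV pV uv] c by auto
qed

lemma ZP: "ZZ - PP = \<mu> *\<^sub>R (z - z')" unfolding ZZ_def PP_def by (simp add: p\<mu> algebra_simps)

lemma cross_vz': "cross (v - u) (z' - z) \<noteq> 0"
proof
  assume h: "cross (v - u) (z' - z) = 0"
  have "cross PP (ZZ - PP) = \<sigma> * (\<mu> * cross (v - u) (z - z'))"
    unfolding ZP unfolding PP_eq by (simp add: cross_scaleR)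
  moreover have "cross (v - u) (z - z') = - cross (v - u) (z' - z)" by (simp add: cross_def algebra_simps)
  ultimately have "cross PP (ZZ - PP) = \<sigma> * \<mu> * - cross (v - u) (z' - z)" by simp
  then have "cross PP (ZZ - PP) = 0" using h by simp
  then have "DD = 0" unfolding DD_def by (simp add: cross_add cross_self)
  then show False using DD0 by simp
qed

lemma KC:
  assumes Ob: "Ob \<in> S" and X: "X \<in> II"
  shows "X \<notin> poly_interior Ob"
proof
  assume XI: "X \<in> poly_interior Ob"
  have sp: "simple_polygon Ob" and OV: "set Ob \<subseteq> V" using os Ob unfolding obstacle_setting_def by auto
  define n where "n = length Ob"
  have n3: "n \<ge> 3" using sp unfolding simple_polygon_def n_def by simp
  define B where "B = poly_boundary Ob"
  have cB: "closed B" unfolding B_def poly_boundary_def poly_edge_def by (intro closed_UN) auto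
  have v1: "closed_segment u v \<inter> poly_interior Ob = {}" using vis1 Ob by blast
  have v2: "closed_segment z z' \<inter> poly_interior Ob = {}" using vis2 Ob by blast
  show False
  proof (cases "II \<inter> B = {}")
    case False
    then obtain b i where b: "b \<in> II" "i < n" "b \<in> poly_edge Ob i" unfolding B_def poly_boundary_def n_def by blast
    define c1 where "c1 = Ob!i"
    define c2 where "c2 = Ob!(Suc i mod n)"
    have c1V: "c1 \<in> V" using OV b(2) unfolding c1_def n_def by auto
    have "Suc i mod length Ob < length Ob" using n3 n_def by (intro mod_less_divisor) linarith
    then have c2V: "c2 \<in> V" using OV nth_mem[of "Suc i mod length Ob" Ob] unfolding c2_def n_def by auto
    have bseg: "b \<in> closed_segment c1 c2" using b(3) unfolding poly_edge_def c1_def c2_def n_def .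
    obtain \<tau> where \<tau>: "0 \<le> \<tau>" "\<tau> \<le> 1" "b = (1 - \<tau>) *\<^sub>R c1 + \<tau> *\<^sub>R c2" using bseg in_segment(1) by blast
    have "h3 b = (1 - \<tau>) * h3 c1 + \<tau> * h3 c2" using \<tau>(3) h3_aff by simp
    moreover have "h3 b > 0" using b(1) unfolding II_def by simp
    ultimately have "h3 c1 > 0 \<or> h3 c2 > 0" using \<tau>(1,2)
      by (smt (verit) mult_nonneg_nonneg mult_nonneg_nonpos)
    then obtain c where c: "c \<in> {c1, c2}" "h3 c > 0" by blast
    have cV: "c \<in> V" using c c1V c2V by auto
    have cseg: "c \<in> closed_segment c1 c2" using c by auto
    have "be c < 0 \<or> h2 c < 0" using corner[OF cV] c(2) by force
    then obtain l where l: "0 < l" "l < 1" "(1 - l) * be b + l * be c \<ge> 0" "(1 - l) * h2 b + l * h2 c \<ge> 0"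
      "(1 - l) * h3 b + l * h3 c > 0" "(1 - l) * be b + l * be c = 0 \<or> (1 - l) * h2 b + l * h2 c = 0"
      using exit_real[of "be b" "h2 b" "h3 b" "h3 c" "be c" "h2 c"] b(1) c(2) unfolding II_def by auto
    define e where "e = (1 - l) *\<^sub>R b + l *\<^sub>R c"
    have he: "be e \<ge> 0" "h2 e \<ge> 0" "h3 e > 0" "be e = 0 \<or> h2 e = 0"
      using l unfolding e_def be_aff h2_aff h3_aff by auto
    have eV: "e \<notin> V" using corner[of e] he by force
    have eO: "e \<notin> set Ob" using eV OV by blast
    have eseg: "e \<in> closed_segment c1 c2" unfolding e_def
      using convexD[OF convex_closed_segment bseg cseg, of "1 - l" l] l by simp
    have eE: "e \<in> poly_edge Ob i" using eseg unfolding poly_edge_def c1_def c2_def n_def .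
    obtain sc where sc: "b - c = sc *\<^sub>R (c2 - c1)" using seg_diff[OF bseg cseg] by blast
    have "b - e = l *\<^sub>R (b - c)" unfolding e_def by (simp add: algebra_simps)
    then have be_diff: "b - e = (l * sc) *\<^sub>R (c2 - c1)" using sc by simp
    have ale: "al e > 0"
    proof -
      have "\<phi> * al e > (1 - \<phi>) * be e" using he(3) unfolding h3_def by simp
      moreover have "(1 - \<phi>) * be e \<ge> 0" using he(1) phi_le1 by simp
      ultimately have "\<phi> * al e > 0" by linarith
      then show ?thesis using phi_pos by (simp add: zero_less_mult_iff)
    qed
    show False
    proof (cases "be e = 0")
      case True
      have ale1: "al e \<le> 1" using he(2) True unfolding h2_def by simp
      have "e - u = (al e * \<sigma>) *\<^sub>R (v - u)" using cramer[of e] True PP_eq by simp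
      then have "e = (1 - al e * \<sigma>) *\<^sub>R u + (al e * \<sigma>) *\<^sub>R v" by (simp add: algebra_simps)
      moreover have "0 < al e * \<sigma>" using ale \<sigma> by simp
      moreover have "al e * \<sigma> < 1"
      proof -
        have "al e * \<sigma> \<le> 1 * \<sigma>" using ale1 \<sigma> by (intro mult_right_mono) auto
        then show ?thesis using \<sigma> by linarith
      qed
      ultimately have eo: "e \<in> open_segment u v" unfolding in_segment(2) using uv by blast
      have tr: "cross (Ob!(Suc i mod length Ob) - Ob!i) (v - u) \<noteq> 0"
      proof
        assume h: "cross (Ob!(Suc i mod length Ob) - Ob!i) (v - u) = 0"
        have "cross PP (b - e) = 0" unfolding be_diff PP_eq
          using h by (simp add: cross_scaleR cross_anti[of "v - u"] c1_def c2_def n_def)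
        then have "be b = be e" unfolding be_def by (simp add: cross_add diff_divide_distrib)
        then show False using True b(1) unfolding II_def by simp
      qed
      have "closed_segment u v \<inter> poly_interior Ob \<noteq> {}" using LL[OF sp b(2)[unfolded n_def] eE eO eo tr] .
      then show False using v1 by simp
    next
      case False
      then have bep: "be e > 0" "h2 e = 0" using he by auto
      have "e - u = al e *\<^sub>R (p - u) + be e *\<^sub>R (z - u)" using cramer[of e] unfolding PP_def ZZ_def .
      moreover have "al e = 1 - be e" using bep(2) unfolding h2_def by simp
      ultimately have "e = (1 - be e) *\<^sub>R p + be e *\<^sub>R z" by (simp add: algebra_simps)
      then have "e = (1 - (1 - be e) * \<mu>) *\<^sub>R z + ((1 - be e) * \<mu>) *\<^sub>R z'"
        unfolding p\<mu> by (simp add: algebra_simps)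
      moreover have "0 < (1 - be e) * \<mu>" "(1 - be e) * \<mu> < 1"
      proof -
        have "be e < 1" using ale \<open>al e = 1 - be e\<close> by simp
        then show "0 < (1 - be e) * \<mu>" using \<mu> by simp
        have "(1 - be e) * \<mu> \<le> 1 * \<mu>" using bep(1) \<mu> by (intro mult_right_mono) auto
        then show "(1 - be e) * \<mu> < 1" using \<mu> by linarith
      qed
      ultimately have eo: "e \<in> open_segment z z'" unfolding in_segment(2) using zz' by blast
      have tr: "cross (Ob!(Suc i mod length Ob) - Ob!i) (z' - z) \<noteq> 0"
      proof
        assume h: "cross (Ob!(Suc i mod length Ob) - Ob!i) (z' - z) = 0"
        have h': "cross (c2 - c1) (z - z') = 0" using h unfolding c1_def c2_def n_def by (simp add: cross_def algebra_simps)
        have "cross (b - e) (ZZ - PP) = (l * sc) * (\<mu> * cross (c2 - c1) (z - z'))"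
          unfolding be_diff ZP by (simp add: cross_scaleR)
        then have "cross (b - e) (ZZ - PP) = 0" using h' by simp
        then have "h2 b = h2 e" unfolding h2_def al_def be_def
          using DD0 by (simp add: cross_add cross_anti[of PP] field_simps) (metis distrib_left)
        then show False using bep(2) b(1) unfolding II_def by simp
      qed
      have "closed_segment z z' \<inter> poly_interior Ob \<noteq> {}" using LL[OF sp b(2)[unfolded n_def] eE eO eo tr] .
      then show False using v2 by simp
    qed
  next
    case True
    have IIins: "II \<subseteq> poly_interior Ob"
    proof
      fix Y assume Y: "Y \<in> II"
      have "connected_component (- B) X Y" unfolding connected_component_def
        using convex_connected[OF convex_II] True X Y by blast
      then show "Y \<in> poly_interior Ob" using inside_same_component XI unfolding poly_interior_def B_def by blast
    qed
    have "p \<in> closure (poly_interior Ob)"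
      unfolding closure_approachable
    proof (intro allI impI)
      fix \<epsilon> :: real assume \<epsilon>: "\<epsilon> > 0"
      define t where "t = min 1 (\<epsilon> / (norm (X - p) + 1)) / 2"
      have t: "0 < t" "t < 1" "t * norm (X - p) < \<epsilon>"
      proof -
        have a: "\<epsilon> / (norm (X - p) + 1) > 0" using \<epsilon> by (simp add: add_nonneg_pos)
        show "0 < t" "t < 1" unfolding t_def using a by auto
        have "min 1 (\<epsilon> / (norm (X - p) + 1)) * norm (X - p) \<le> (\<epsilon> / (norm (X - p) + 1)) * (norm (X - p) + 1)"
          using a by (intro mult_mono) auto
        also have "\<dots> = \<epsilon>" proof - have "norm (X - p) + 1 > 0" by (simp add: add_nonneg_pos) then show ?thesis by simp qed
        finally show "t * norm (X - p) < \<epsilon>" unfolding t_def using \<epsilon> by simp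
      qed
      define Y where "Y = (1 - t) *\<^sub>R p + t *\<^sub>R X"
      have "Y \<in> II" using X t phi_pos unfolding II_def Y_def
        by (simp add: be_aff h2_aff h3_aff be_p be_p_ add_pos_pos)
      moreover have "dist Y p < \<epsilon>" unfolding Y_def dist_norm using t
        by (simp add: algebra_simps norm_minus_commute)
          (metis norm_scaleR abs_of_pos scaleR_right_diff_distrib t(1))
      ultimately show "\<exists>Y\<in>poly_interior Ob. dist Y p < \<epsilon>" using IIins by blast
    qed
    moreover have "p \<notin> poly_interior Ob" using v1 p_open_uv open_closed_segment by blast
    ultimately have "p \<in> B" using closure_inside_subset[OF cB] unfolding poly_interior_def B_def by blast
    then obtain i where i: "i < n" "p \<in> poly_edge Ob i" unfolding B_def poly_boundary_def n_def by blast
    have pO: "p \<notin> set Ob" using pV OV by blast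
    define d where "d = Ob!(Suc i mod length Ob) - Ob!i"
    have d0: "d \<noteq> 0"
    proof
      assume "d = 0"
      then have "Ob!(Suc i mod n) = Ob!i" unfolding d_def n_def by simp
      moreover have "Suc i mod n \<noteq> i" using i n3 by (simp add: sucmod)
      moreover have "distinct Ob" using sp unfolding simple_polygon_def by simp
      moreover have "Suc i mod n < n" using n3 by (intro mod_less_divisor) linarith
      ultimately show False using i n3 nth_eq_iff_index_eq[of Ob "Suc i mod n" i] unfolding n_def by simp
    qed
    show False
    proof (cases "cross d (v - u) = 0")
      case False
      have "closed_segment u v \<inter> poly_interior Ob \<noteq> {}"
        using LL[OF sp i(1)[unfolded n_def] i(2) pO p_open_uv] False unfolding d_def by blast
      then show False using v1 by simp
    next
      case True
      show False
      proof (cases "cross d (z' - z) = 0")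
        case False
        have "closed_segment z z' \<inter> poly_interior Ob \<noteq> {}"
          using LL[OF sp i(1)[unfolded n_def] i(2) pO p_open_zz] False unfolding d_def by blast
        then show False using v2 by simp
      next
        case True2: True
        have "cross (v - u) (z' - z) = 0" using par3[OF d0 True True2] .
        then show False using cross_vz' by simp
      qed
    qed
  qed
qed


lemma KC':
  assumes Ob: "Ob \<in> S" and Y: "be Y \<ge> 0" "h2 Y \<ge> 0" "h3 Y \<ge> 0"
  shows "Y \<notin> poly_interior Ob"
proof
  assume YI: "Y \<in> poly_interior Ob"
  have cB: "closed (poly_boundary Ob)" unfolding poly_boundary_def poly_edge_def by (intro closed_UN) auto
  have "open (poly_interior Ob)" unfolding poly_interior_def using open_inside cB by blast
  then obtain \<epsilon> where \<epsilon>: "\<epsilon> > 0" "ball Y \<epsilon> \<subseteq> poly_interior Ob" using YI open_contains_ball by blast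
  define s where "s = min 1 (\<epsilon> / (norm (c0 - Y) + 1)) / 2"
  have s: "0 < s" "s < 1" "s * norm (c0 - Y) < \<epsilon>"
  proof -
    have a: "\<epsilon> / (norm (c0 - Y) + 1) > 0" using \<epsilon> by (simp add: add_nonneg_pos)
    show "0 < s" "s < 1" unfolding s_def using a by auto
    have "min 1 (\<epsilon> / (norm (c0 - Y) + 1)) * norm (c0 - Y) \<le> (\<epsilon> / (norm (c0 - Y) + 1)) * (norm (c0 - Y) + 1)"
      using a by (intro mult_mono) auto
    also have "\<dots> = \<epsilon>" proof - have "norm (c0 - Y) + 1 > 0" by (simp add: add_nonneg_pos) then show ?thesis by simp qed
    finally show "s * norm (c0 - Y) < \<epsilon>" unfolding s_def using \<epsilon> by simp
  qed
  define Y' where "Y' = (1 - s) *\<^sub>R Y + s *\<^sub>R c0"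
  have c0: "be c0 > 0" "h2 c0 > 0" "h3 c0 > 0" using c0I unfolding II_def by auto
  have "Y' \<in> II" using Y c0 s unfolding II_def Y'_def
    by (simp add: be_aff h2_aff h3_aff add_nonneg_pos)
  moreover have "dist Y Y' < \<epsilon>"
  proof -
    have "Y - Y' = s *\<^sub>R (Y - c0)" unfolding Y'_def by (simp add: algebra_simps)
    then have "dist Y Y' = s * norm (c0 - Y)" unfolding dist_norm using s(1) by (simp add: norm_minus_commute)
    then show ?thesis using s by simp
  qed
  moreover have "Y' \<in> poly_interior Ob" using \<epsilon>(2) \<open>dist Y Y' < \<epsilon>\<close> by auto
  ultimately show False using KC[OF Ob] by blast
qed

lemma bew: "be w > 0"
proof -
  have "\<phi> * (al w + be w) > 0" using phi_pos alw_be by simp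
  then show ?thesis using phi_def' by simp
qed

lemma wv: "w \<noteq> v" using bew be_v by auto

lemma vis_w: "visible S u w"
  unfolding visible_def
proof (intro ballI equalityI subsetI)
  fix Ob Y assume Ob: "Ob \<in> S" and Y: "Y \<in> closed_segment u w \<inter> poly_interior Ob"
  obtain t where t: "0 \<le> t" "t \<le> 1" "Y = (1 - t) *\<^sub>R u + t *\<^sub>R w" using Y in_segment(1) by blast
  have h2u: "h2 u = 1" unfolding h2_def using al_u be_u by simp
  have h3u: "h3 u = 0" unfolding h3_def using al_u be_u by simp
  have h2w: "h2 w \<ge> 0" unfolding h2_def using wV by simp
  have "be Y \<ge> 0" "h2 Y \<ge> 0" "h3 Y \<ge> 0" unfolding t(3) be_aff h2_aff h3_aff
    using t be_u h2u h3u h3_w h2w wV by simp_all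
  then show "Y \<in> {}" using KC'[OF Ob] Y by blast
qed simp

lemma lin_be: "be (u + Y) = cross PP Y / DD" and lin_al: "al (u + Y) = cross Y ZZ / DD"
  unfolding be_def al_def by simp_all

lemma subcone_w: "same_subcone S u v w"
  unfolding same_subcone_def
proof (intro ballI impI notI)
  fix Ob d assume Ob: "Ob \<in> S" and "u \<in> set Ob" and d: "d \<in> open_segment (v - u) (w - u)"
    and en: "enters_obstacle Ob u d"
  obtain s where s: "0 < s" "s < 1" "d = (1 - s) *\<^sub>R (v - u) + s *\<^sub>R (w - u)" using d in_segment(2) by blast
  obtain \<epsilon> where \<epsilon>: "\<epsilon> > 0" "\<forall>t. 0 < t \<and> t < \<epsilon> \<longrightarrow> u + t *\<^sub>R d \<in> poly_interior Ob"
    using en unfolding enters_obstacle_def by blast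
  have bv: "cross PP (v - u) = 0" unfolding PP_eq by (simp add: cross_scaleR cross_self)
  have av: "cross (v - u) ZZ / DD = 1 / \<sigma>" using al_v lin_al[of "v - u"] by simp
  have bw': "cross PP (w - u) / DD = be w" using lin_be[of "w - u"] by simp
  have aw': "cross (w - u) ZZ / DD = al w" using lin_al[of "w - u"] by simp
  define K where "K = (1 - s) / \<sigma> + s * (al w + be w)"
  have K: "K > 0" unfolding K_def using s \<sigma> alw_be by (simp add: add_pos_pos)
  define t where "t = min (\<epsilon> / 2) (1 / (2 * K))"
  have t: "0 < t" "t < \<epsilon>" "t * K \<le> 1 / 2"
  proof -
    show "0 < t" "t < \<epsilon>" unfolding t_def using \<epsilon> K by auto
    have "t * K \<le> (1 / (2 * K)) * K" unfolding t_def using K by (intro mult_right_mono) auto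
    then show "t * K \<le> 1 / 2" using K by simp
  qed
  define X where "X = u + t *\<^sub>R d"
  have c1: "cross PP (t *\<^sub>R d) = t * ((1 - s) * cross PP (v - u) + s * cross PP (w - u))"
    unfolding s(3) by (simp only: cross_scaleR cross_add(2))
  have c2: "cross (t *\<^sub>R d) ZZ = t * ((1 - s) * cross (v - u) ZZ + s * cross (w - u) ZZ)"
    unfolding s(3) by (simp only: cross_scaleR cross_add(1))
  have beX: "be X = t * s * be w" unfolding X_def lin_be c1 bv bw'[symmetric] by simp
  have "al X = t * ((1 - s) * (cross (v - u) ZZ / DD) + s * (cross (w - u) ZZ / DD))"
    unfolding X_def lin_al c2 using DD0 by (simp add: field_simps)
  then have alX: "al X = t * ((1 - s) / \<sigma> + s * al w)" unfolding av aw' by simp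
  have "X \<in> II"
  proof -
    have "be X > 0" unfolding beX using t s bew by simp
    moreover have "h2 X > 0"
    proof -
      have "h2 X = 1 - t * K" unfolding h2_def alX beX K_def by (simp add: algebra_simps)
      then show ?thesis using t by simp
    qed
    moreover have "h3 X > 0"
    proof -
      have "h3 X = t * ((1 - s) * \<phi> / \<sigma>) + t * s * h3 w" unfolding h3_def alX beX
        by (simp add: algebra_simps)
      then have "h3 X = t * ((1 - s) * \<phi> / \<sigma>)" using h3_w by simp
      then show ?thesis using t s \<sigma> phi_pos by simp
    qed
    ultimately show ?thesis unfolding II_def by simp
  qed
  moreover have "X \<in> poly_interior Ob" using \<epsilon>(2) t unfolding X_def by blast
  ultimately show False using KC[OF Ob] by blast
qed

lemma lk_comb: "lk j (a *\<^sub>R X + b *\<^sub>R Y) = a * lk j X + b * lk j Y"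
  by (simp add: lk_def dot_def algebra_simps)

lemma lk_w: "lk j (w - u) = (al w * \<sigma>) * lk j (v - u) + be w * (lk j z - lk j u)"
proof -
  have "w - u = (al w * \<sigma>) *\<^sub>R (v - u) + be w *\<^sub>R (z - u)" using cramer[of w] PP_eq ZZ_def by simp
  then show ?thesis using lk_comb[of j "al w * \<sigma>" "v - u" "be w" "z - u"] lk_lin(2)[of j z u] by simp
qed

lemma icv': "\<forall>j\<in>{0,2,4}. j \<noteq> k \<longrightarrow> lk j (v - u) \<le> 0" using icv in_cone_iff[OF k] by blast

lemma lkk_v: "lk k (v - u) \<ge> 0"
proof -
  have s: "lk 0 (v - u) + lk 2 (v - u) + lk 4 (v - u) = 0" by (rule lk_sum)
  show ?thesis using k icv' s by auto
qed

lemma ic_w: "in_cone k u w"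
  unfolding in_cone_iff[OF k]
proof (intro conjI ballI impI)
  show "w \<noteq> u" using wV by simp
  fix j assume j: "j \<in> {0,2,4}" "j \<noteq> k"
  have a: "lk j (v - u) \<le> 0" using icv' j by blast
  have "lk j z \<le> max (lk j u) (lk j v)" using zT j by blast
  moreover have "lk j v \<le> lk j u" using a lk_lin(2)[of j v u] by simp
  ultimately have b: "lk j z - lk j u \<le> 0" by simp
  have "(al w * \<sigma>) * lk j (v - u) \<le> 0" using a wV \<sigma> by (simp add: mult_nonneg_nonpos)
  moreover have "be w * (lk j z - lk j u) \<le> 0" using b wV by (simp add: mult_nonneg_nonpos)
  ultimately show "lk j (w - u) \<le> 0" using lk_w by simp
qed

lemma proj_lt: "proj k u w < proj k u v"
proof -
  define L where "L = lk k (v - u)"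
  have L0: "L \<ge> 0" using lkk_v L_def by simp
  have "lk k z \<le> max (lk k u) (lk k v)" using zT k by blast
  moreover have "lk k u \<le> lk k v" using L0 lk_lin(2)[of k v u] L_def by simp
  ultimately have b: "lk k z - lk k u \<le> L" using L_def lk_lin(2)[of k v u] by simp
  have "lk k (w - u) \<le> (al w * \<sigma>) * L + be w * L"
    using lk_w[of k] b wV mult_left_mono[of "lk k z - lk k u" L "be w"] unfolding L_def by simp
  also have "\<dots> = (al w * \<sigma> + be w) * L" by (simp add: algebra_simps)
  also have "\<dots> \<le> 1 * L"
  proof (rule mult_right_mono[OF _ L0])
    have "al w * \<sigma> \<le> al w * 1" using wV \<sigma> by (intro mult_left_mono) auto
    then show "al w * \<sigma> + be w \<le> 1" using wV by simp
  qed
  finally have le: "lk k (w - u) \<le> lk k (v - u)" unfolding L_def by simp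
  have "lk k (w - v) \<noteq> 0" using gp_lk[OF gp vV wV(1) wv[symmetric] k] .
  moreover have "lk k (w - v) = lk k (w - u) - lk k (v - u)"
    using lk_lin(2)[of k w v] lk_lin(2)[of k w u] lk_lin(2)[of k v u] by simp
  ultimately have "lk k (w - u) < lk k (v - u)" using le by simp
  then show ?thesis unfolding proj_def lk_def .
qed

theorem contra: False
  using minv wV(1) ic_w vis_w subcone_w proj_lt by force

end


lemma (in cfg) cfg_False: False
proof -
  obtain w where "w \<in> WW" "\<forall>w'\<in>WW. ff w \<le> ff w'" using ex_min by blast
  then interpret cfg2 V S u v z z' p k \<sigma> \<mu> w by unfold_locales
  show False by (rule contra)
qed

lemma edge_contra:
  assumes os: "obstacle_setting V S" and gp: "general_position V"
    and ge: "Ginf_edge V S u v" and zV: "z \<in> V" "z \<noteq> u" "z \<noteq> v"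
    and pv: "p \<in> open_segment u v" and pz: "p \<in> open_segment z z'"
    and vz: "visible S z z'" and zT: "\<forall>j\<in>{0,2,4}. lk j z \<le> max (lk j u) (lk j v)"
  shows False
proof -
  obtain k where k: "k < 6" "even k" "in_cone k u v" "visible S u v"
    "\<forall>w\<in>V. in_cone k u w \<and> visible S u w \<and> same_subcone S u v w \<longrightarrow> proj k u v \<le> proj k u w"
    and uV: "u \<in> V" and vV: "v \<in> V"
    using ge unfolding Ginf_edge_def by blast
  have k3: "k \<in> {0, 2, 4}" using k(1,2) by (auto simp: less_Suc_eq)
  obtain \<sigma> where \<sigma>: "0 < \<sigma>" "\<sigma> < 1" "p = (1 - \<sigma>) *\<^sub>R u + \<sigma> *\<^sub>R v" using pv in_segment(2) by blast
  obtain \<mu> where \<mu>: "0 < \<mu>" "\<mu> < 1" "p = (1 - \<mu>) *\<^sub>R z + \<mu> *\<^sub>R z'" using pz in_segment(2) by blast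
  have vis1: "\<forall>Ob\<in>S. closed_segment u v \<inter> poly_interior Ob = {}" using k(4) unfolding visible_def .
  have vis2: "\<forall>Ob\<in>S. closed_segment z z' \<inter> poly_interior Ob = {}" using vz unfolding visible_def .
  interpret cfg V S u v z z' p k \<sigma> \<mu>
    by (rule cfg.intro[OF os gp uV vV k3 k(3) vis1 k(5) zV(1) zV(2) zV(3) \<sigma>(1) \<sigma>(2) \<sigma>(3) \<mu>(1) \<mu>(2) \<mu>(3) vis2 zT])
  show False by (rule cfg_False)
qed

lemma lk_seg:
  assumes "p \<in> open_segment a b"
  shows "min (lk j a) (lk j b) \<le> lk j p \<and> lk j p \<le> max (lk j a) (lk j b)"
proof -
  obtain s where s: "0 < s" "s < 1" "p = (1 - s) *\<^sub>R a + s *\<^sub>R b" using assms in_segment(2) by blast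
  have "lk j p = (1 - s) * lk j a + s * lk j b" unfolding s(3) by (simp add: lk_def dot_def algebra_simps)
  moreover have "(1 - s) * lk j a + s * lk j b \<le> (1 - s) * max (lk j a) (lk j b) + s * max (lk j a) (lk j b)"
    using s by (intro add_mono mult_left_mono) auto
  moreover have "(1 - s) * min (lk j a) (lk j b) + s * min (lk j a) (lk j b) \<le> (1 - s) * lk j a + s * lk j b"
    using s by (intro add_mono mult_left_mono) auto
  ultimately show ?thesis by (simp add: algebra_simps)
qed

lemma shared_contra:
  assumes gp: "general_position V" and V: "a \<in> V" "b \<in> V" "c \<in> V" "a \<noteq> b" "a \<noteq> c" "b \<noteq> c"
    and p: "p \<in> open_segment a b" "p \<in> open_segment a c"
  shows False
proof -
  obtain s where s: "0 < s" "p = (1 - s) *\<^sub>R a + s *\<^sub>R b" using p(1) in_segment(2) by blast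
  obtain t where t: "0 < t" "p = (1 - t) *\<^sub>R a + t *\<^sub>R c" using p(2) in_segment(2) by blast
  have "s *\<^sub>R (b - a) = t *\<^sub>R (c - a)" using s t by (simp add: algebra_simps)
  then have "(1 / t) *\<^sub>R (t *\<^sub>R (c - a)) = (1 / t) *\<^sub>R (s *\<^sub>R (b - a))" by simp
  then have "c - a = (s / t) *\<^sub>R (b - a)" using t by simp
  then have "cross (b - a) (c - a) = 0" by (simp add: cross_def)
  then show False using gp_cross[OF gp V(1,2,3) V(4) V(6) V(5)] by simp
qed

lemma Ginf_plane:
  assumes os: "obstacle_setting V S" and gp: "general_position V"
    and e1: "Ginf_edge V S u v" and e2: "Ginf_edge V S x y" and ne: "{u, v} \<noteq> {x, y}"
  shows "open_segment u v \<inter> open_segment x y = {}"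
proof (rule ccontr)
  assume "open_segment u v \<inter> open_segment x y \<noteq> {}"
  then obtain p where pu: "p \<in> open_segment u v" and px: "p \<in> open_segment x y" by blast
  have V: "u \<in> V" "v \<in> V" "x \<in> V" "y \<in> V" using e1 e2 unfolding Ginf_edge_def by auto
  have uv: "u \<noteq> v" "x \<noteq> y" using pu px by auto
  have vis: "visible S u v" "visible S x y" using e1 e2 unfolding Ginf_edge_def by auto
  have visr: "visible S v u" "visible S y x" using vis unfolding visible_def by (auto simp: closed_segment_commute)
  have pu': "p \<in> open_segment v u" and px': "p \<in> open_segment y x" using pu px by (auto simp: open_segment_commute)
  have d: "u \<noteq> x" "u \<noteq> y" "v \<noteq> x" "v \<noteq> y"
  proof -
    show "u \<noteq> x"
    proof
      assume h: "u = x"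
      then have "v \<noteq> y" using ne by auto
      then show False using shared_contra[OF gp V(1) V(2) V(4) uv(1) _ _ pu] px h uv by auto
    qed
    show "u \<noteq> y"
    proof
      assume h: "u = y"
      then have "v \<noteq> x" using ne by auto
      then show False using shared_contra[OF gp V(1) V(2) V(3) uv(1) _ _ pu] px' h uv by auto
    qed
    show "v \<noteq> x"
    proof
      assume h: "v = x"
      then have "u \<noteq> y" using ne by auto
      then show False using shared_contra[OF gp V(2) V(1) V(4) uv(1)[symmetric] _ _ pu'] px h uv by auto
    qed
    show "v \<noteq> y"
    proof
      assume h: "v = y"
      then have "u \<noteq> x" using ne by auto
      then show False using shared_contra[OF gp V(2) V(1) V(3) uv(1)[symmetric] _ _ pu'] px' h uv by auto
    qed
  qed
  have s1: "\<And>j. min (lk j u) (lk j v) \<le> lk j p \<and> lk j p \<le> max (lk j u) (lk j v)" using lk_seg[OF pu] by blast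
  have s2: "\<And>j. min (lk j x) (lk j y) \<le> lk j p \<and> lk j p \<le> max (lk j x) (lk j y)" using lk_seg[OF px] by blast
  have T: "(lk 0 x \<le> max (lk 0 u) (lk 0 v) \<and> lk 2 x \<le> max (lk 2 u) (lk 2 v) \<and> lk 4 x \<le> max (lk 4 u) (lk 4 v)) \<or>
         (lk 0 y \<le> max (lk 0 u) (lk 0 v) \<and> lk 2 y \<le> max (lk 2 u) (lk 2 v) \<and> lk 4 y \<le> max (lk 4 u) (lk 4 v)) \<or>
         (lk 0 u \<le> max (lk 0 x) (lk 0 y) \<and> lk 2 u \<le> max (lk 2 x) (lk 2 y) \<and> lk 4 u \<le> max (lk 4 x) (lk 4 y)) \<or>
         (lk 0 v \<le> max (lk 0 x) (lk 0 y) \<and> lk 2 v \<le> max (lk 2 x) (lk 2 y) \<and> lk 4 v \<le> max (lk 4 x) (lk 4 y))"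
    by (rule tri_real[of "lk 0 u" "lk 0 v" "lk 0 p" "lk 2 u" "lk 2 v" "lk 2 p" "lk 4 u" "lk 4 v" "lk 4 p"
        "lk 0 x" "lk 0 y" "lk 2 x" "lk 2 y" "lk 4 x" "lk 4 y"]) (use s1 s2 in blast)+
  then show False
  proof (elim disjE)
    assume h0: "lk 0 x \<le> max (lk 0 u) (lk 0 v) \<and> lk 2 x \<le> max (lk 2 u) (lk 2 v) \<and> lk 4 x \<le> max (lk 4 u) (lk 4 v)"
    then have h: "\<forall>j\<in>{0,2,4}. lk j x \<le> max (lk j u) (lk j v)" by simp
    show False using edge_contra[OF os gp e1 V(3) d(1)[symmetric] d(3)[symmetric] pu px vis(2) h] .
  next
    assume h0: "lk 0 y \<le> max (lk 0 u) (lk 0 v) \<and> lk 2 y \<le> max (lk 2 u) (lk 2 v) \<and> lk 4 y \<le> max (lk 4 u) (lk 4 v)"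
    then have h: "\<forall>j\<in>{0,2,4}. lk j y \<le> max (lk j u) (lk j v)" by simp
    show False using edge_contra[OF os gp e1 V(4) d(2)[symmetric] d(4)[symmetric] pu px' visr(2) h] .
  next
    assume h0: "lk 0 u \<le> max (lk 0 x) (lk 0 y) \<and> lk 2 u \<le> max (lk 2 x) (lk 2 y) \<and> lk 4 u \<le> max (lk 4 x) (lk 4 y)"
    then have h: "\<forall>j\<in>{0,2,4}. lk j u \<le> max (lk j x) (lk j y)" by simp
    show False using edge_contra[OF os gp e2 V(1) d(1) d(2) px pu vis(1) h] .
  next
    assume h0: "lk 0 v \<le> max (lk 0 x) (lk 0 y) \<and> lk 2 v \<le> max (lk 2 x) (lk 2 y) \<and> lk 4 v \<le> max (lk 4 x) (lk 4 y)"
    then have h: "\<forall>j\<in>{0,2,4}. lk j v \<le> max (lk j x) (lk j y)" by simp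
    show False using edge_contra[OF os gp e2 V(2) d(3) d(4) px pu' visr(1) h] .
  qed
qed

theorem lemma6:
  fixes V :: "pt set" and S :: "pt list set"
  assumes "obstacle_setting V S"
    and "general_position V"
  shows "plane (G15 V S)"
  unfolding plane_def
proof (intro allI impI)
  fix a b c d assume h: "{a, b} \<in> G15 V S \<and> {c, d} \<in> G15 V S \<and> {a, b} \<noteq> {c, d}"
  have g1: "{a, b} \<in> Ginf V S" and g2: "{c, d} \<in> Ginf V S" using h unfolding G15_def mem_Collect_eq by simp_all
  obtain u v where e1: "{a, b} = {u, v}" "Ginf_edge V S u v" using g1 unfolding Ginf_def mem_Collect_eq by blast
  obtain x y where e2: "{c, d} = {x, y}" "Ginf_edge V S x y" using g2 unfolding Ginf_def mem_Collect_eq by blast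
  have o1: "open_segment a b = open_segment u v"
  proof -
    have "(a = u \<and> b = v) \<or> (a = v \<and> b = u)" using e1(1) by (simp add: doubleton_eq_iff)
    then show ?thesis by (metis open_segment_commute)
  qed
  have o2: "open_segment c d = open_segment x y"
  proof -
    have "(c = x \<and> d = y) \<or> (c = y \<and> d = x)" using e2(1) by (simp add: doubleton_eq_iff)
    then show ?thesis by (metis open_segment_commute)
  qed
  have ne: "{u, v} \<noteq> {x, y}" using h unfolding e1(1) e2(1) by simp
  show "open_segment a b \<inter> open_segment c d = {}"
    unfolding o1 o2 by (rule Ginf_plane[OF assms e1(2) e2(2) ne])
qed

end
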